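(* Let $\mathcal{A}$ be a unital associative algebra with unit $e$ and let $\mathcal{B}= \mathcal{D}(\mathcal{A})$. Then: (1) $\mathcal{B}$ is ordered, i.e. for every $n$, if $x_1,\dots,x_n\in\mathcal{B}$ satisfy $\sum_{i=1}^n x_i x_i^* =0$, then $x_1= \cdots=x_n=0$. (2) If $x_1,\dots,x_n\in\mathcal{B}$ satisfy $\sum_{j=1}^n x_j^* x_j = e$, then $x_j\in \mathbb{C} e$ for all $j$. (3) If $x\in \mathcal{A}$ (viewed in $\mathcal{B}$ via the canonical embedding) and $y\in \mathcal{B}$ satisfy $x^* x =y^*y$, then $x= \lambda y$ for some $\lambda\in \mathbb{C}$ with $|\lambda| = 1$.
   Context: All algebras are complex and unital. For a unital associative algebra $\mathcal{A}$, $\mathcal{A}^*$ is an associative algebra with an additive, conjugate-linear, anti-multiplicative bijection $\phi:\mathcal{A}\to\mathcal{A}^*$. The $*$-double $\mathcal{D}(\mathcal{A})$ is the unital free product $\mathcal{A}*\mathcal{A}^*$ of associative algebras with involution determined by $a^*=\phi(a)$ for $a\in\mathcal{A}$ and $b^*=\phi^{-1}(b)$ for $b\in\mathcal{A}^*$. *)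

theory Defs
  imports Complex_Main
begin

class cplx_unital_alg = ring + monoid_mult +
  fixes cscale :: "complex \<Rightarrow> 'a \<Rightarrow> 'a"
  assumes cscale_add_right: "cscale c (x + y) = cscale c x + cscale c y"
    and cscale_add_left: "cscale (c + d) x = cscale c x + cscale d x"
    and cscale_cscale: "cscale c (cscale d x) = cscale (c * d) x"
    and cscale_one: "cscale 1 x = x"
    and cscale_mult_left: "cscale c x * y = cscale c (x * y)"
    and cscale_mult_right: "x * cscale c y = cscale c (x * y)"

text \<open>Generators: \<open>Inl a\<close> stands for \<open>a \<in> A\<close>, \<open>Inr a\<close> stands for \<open>\<phi>(a) \<in> A^*\<close>.
  We realise \<open>A^*\<close> as the conjugate-opposite copy of \<open>A\<close>, with \<open>\<phi>\<close> the identity on the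
  underlying set (any \<open>(A^*,\<phi>)\<close> as in the paper is canonically isomorphic to it).
  Elements of the free (noncommutative) complex algebra on these generators are finitely
  supported coefficient functions on words.\<close>

type_synonym 'a fa = "('a + 'a) list \<Rightarrow> complex"

definition fa_carrier :: "'a fa set" where
  "fa_carrier = {f. finite {w. f w \<noteq> 0}}"

definition fa_word :: "('a + 'a) list \<Rightarrow> 'a fa" where
  "fa_word w = (\<lambda>v. if v = w then 1 else 0)"

definition fa_one :: "'a fa" where
  "fa_one = fa_word []"

definition fa_add :: "'a fa \<Rightarrow> 'a fa \<Rightarrow> 'a fa" where
  "fa_add f g = (\<lambda>w. f w + g w)"

definition fa_diff :: "'a fa \<Rightarrow> 'a fa \<Rightarrow> 'a fa" where
  "fa_diff f g = (\<lambda>w. f w - g w)"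

definition fa_smult :: "complex \<Rightarrow> 'a fa \<Rightarrow> 'a fa" where
  "fa_smult c f = (\<lambda>w. c * f w)"

definition fa_mul :: "'a fa \<Rightarrow> 'a fa \<Rightarrow> 'a fa" where
  "fa_mul f g = (\<lambda>w. \<Sum>i\<le>length w. f (take i w) * g (drop i w))"

fun swap_gen :: "'a + 'a \<Rightarrow> 'a + 'a" where
  "swap_gen (Inl a) = Inr a"
| "swap_gen (Inr a) = Inl a"

definition fa_star :: "'a fa \<Rightarrow> 'a fa" where
  "fa_star f = (\<lambda>w. cnj (f (rev (map swap_gen w))))"

definition dbl_rels :: "'a::cplx_unital_alg fa set" where
  "dbl_rels =
     {fa_diff (fa_word [Inl (a + b)]) (fa_add (fa_word [Inl a]) (fa_word [Inl b])) | a b. True}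
   \<union> {fa_diff (fa_word [Inl (cscale c a)]) (fa_smult c (fa_word [Inl a])) | c a. True}
   \<union> {fa_diff (fa_word [Inl a, Inl b]) (fa_word [Inl (a * b)]) | a b. True}
   \<union> {fa_diff (fa_word [Inl 1]) fa_one}
   \<union> {fa_diff (fa_word [Inr (a + b)]) (fa_add (fa_word [Inr a]) (fa_word [Inr b])) | a b. True}
   \<union> {fa_diff (fa_word [Inr (cscale c a)]) (fa_smult (cnj c) (fa_word [Inr a])) | c a. True}
   \<union> {fa_diff (fa_word [Inr a, Inr b]) (fa_word [Inr (b * a)]) | a b. True}
   \<union> {fa_diff (fa_word [Inr 1]) fa_one}"

text \<open>The two-sided ideal generated by the relations; \<open>D(A)\<close> is \<open>fa_carrier\<close> modulo it.\<close>
inductive_set dbl_ideal :: "'a::cplx_unital_alg fa set" where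
  rel: "r \<in> dbl_rels \<Longrightarrow> r \<in> dbl_ideal"
| zero: "(\<lambda>_. 0) \<in> dbl_ideal"
| add: "f \<in> dbl_ideal \<Longrightarrow> g \<in> dbl_ideal \<Longrightarrow> fa_add f g \<in> dbl_ideal"
| smult: "f \<in> dbl_ideal \<Longrightarrow> fa_smult c f \<in> dbl_ideal"
| mult_left: "f \<in> dbl_ideal \<Longrightarrow> g \<in> fa_carrier \<Longrightarrow> fa_mul g f \<in> dbl_ideal"
| mult_right: "f \<in> dbl_ideal \<Longrightarrow> g \<in> fa_carrier \<Longrightarrow> fa_mul f g \<in> dbl_ideal"

definition dbl_eq :: "'a::cplx_unital_alg fa \<Rightarrow> 'a fa \<Rightarrow> bool" where
  "dbl_eq f g \<longleftrightarrow> fa_diff f g \<in> dbl_ideal"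

definition dbl_emb :: "'a \<Rightarrow> 'a fa" where
  "dbl_emb a = fa_word [Inl a]"

end

theory Submission
  imports Defs
begin


interpretation cv: vector_space "cscale :: complex \<Rightarrow> 'a::cplx_unital_alg \<Rightarrow> 'a"
  by unfold_locales (auto simp: cscale_add_right cscale_add_left cscale_cscale cscale_one)

definition Bs :: "'a::cplx_unital_alg set" where "Bs = cv.extend_basis {1}"
definition coord :: "'a::cplx_unital_alg \<Rightarrow> 'a \<Rightarrow> complex" where
  "coord x c = cv.representation Bs x c"

lemma Bs_props: assumes "(1::'a::cplx_unital_alg) \<noteq> 0"
  shows "(1::'a) \<in> Bs" "cv.independent (Bs::'a set)" "cv.span (Bs::'a set) = UNIV"
proof -
  have "cv.independent {1::'a}" using assms by simp
  then show "(1::'a) \<in> Bs" "cv.independent (Bs::'a set)" "cv.span (Bs::'a set) = UNIV"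
    unfolding Bs_def using cv.extend_basis_superset[OF \<open>cv.independent {1::'a}\<close>]
      cv.independent_extend_basis[OF \<open>cv.independent {1::'a}\<close>]
      cv.span_extend_basis[OF \<open>cv.independent {1::'a}\<close>] by auto
qed

lemma coord_nz: "coord x c \<noteq> 0 \<Longrightarrow> c \<in> Bs"
  unfolding coord_def by (rule cv.representation_ne_zero)

lemma coord_fin: "finite {c. coord x c \<noteq> 0}"
  unfolding coord_def by (rule cv.finite_representation)

context
  assumes nt: "(1::'a::cplx_unital_alg) \<noteq> 0"
begin

lemma coord_add: "coord ((x::'a) + y) c = coord x c + coord y c"
  unfolding coord_def using Bs_props[OF nt]
  by (simp add: cv.representation_add)

lemma coord_scale: "coord (cscale r (x::'a)) c = r * coord x c"
  unfolding coord_def using Bs_props[OF nt]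
  by (simp add: cv.representation_scale)

lemma coord_zero: "coord (0::'a) c = 0"
  unfolding coord_def by (simp add: cv.representation_zero)

lemma coord_sum: "coord (\<Sum>i\<in>I. (v i::'a)) c = (\<Sum>i\<in>I. coord (v i) c)"
  unfolding coord_def using Bs_props[OF nt]
  by (simp add: cv.representation_sum)

lemma coord_basis: "(b::'a) \<in> Bs \<Longrightarrow> coord b c = (if c = b then 1 else 0)"
  unfolding coord_def using Bs_props[OF nt]
  by (simp add: cv.representation_basis)

lemma coord_one: "coord (1::'a) c = (if c = 1 then 1 else 0)"
  using coord_basis Bs_props[OF nt] by blast

lemma coord_expand:
  assumes "finite S" "{c. coord (x::'a) c \<noteq> 0} \<subseteq> S"
  shows "(\<Sum>c\<in>S. cscale (coord x c) c) = x"
proof -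
  have "(\<Sum>c\<in>S. cscale (coord x c) c) = (\<Sum>c | coord x c \<noteq> 0. cscale (coord x c) c)"
    by (rule sum.mono_neutral_right) (use assms in \<open>auto simp: cv.scale_eq_0_iff\<close>)
  also have "\<dots> = x" unfolding coord_def
    by (rule cv.sum_nonzero_representation_eq) (use Bs_props[OF nt] in auto)
  finally show ?thesis .
qed

end

definition lin :: "(('b::type) \<Rightarrow> 'c \<Rightarrow> complex) \<Rightarrow> ('b \<Rightarrow> complex) \<Rightarrow> 'c \<Rightarrow> complex" where
  "lin F d = (\<lambda>w'. \<Sum>w | d w \<noteq> 0. d w * F w w')"

definition fs :: "('b \<Rightarrow> complex) \<Rightarrow> bool" where "fs d \<longleftrightarrow> finite {w. d w \<noteq> 0}"

lemma lin_eq: "finite S \<Longrightarrow> {w. d w \<noteq> 0} \<subseteq> S \<Longrightarrow> lin F d w' = (\<Sum>w\<in>S. d w * F w w')"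
  unfolding lin_def by (rule sum.mono_neutral_left) auto

lemma lin_supp: "lin F d w' \<noteq> 0 \<Longrightarrow> \<exists>w. d w \<noteq> 0 \<and> F w w' \<noteq> 0"
proof (rule ccontr)
  assume a: "lin F d w' \<noteq> 0" "\<not> (\<exists>w. d w \<noteq> 0 \<and> F w w' \<noteq> 0)"
  then have "lin F d w' = 0" unfolding lin_def by (intro sum.neutral) auto
  with a show False by simp
qed

lemma fs_add: "fs d1 \<Longrightarrow> fs d2 \<Longrightarrow> fs (\<lambda>w. d1 w + d2 w)"
  unfolding fs_def by (rule finite_subset[of _ "{w. d1 w \<noteq> 0} \<union> {w. d2 w \<noteq> 0}"]) auto

lemma fs_diff: "fs d1 \<Longrightarrow> fs d2 \<Longrightarrow> fs (\<lambda>w. d1 w - d2 w)"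
  unfolding fs_def by (rule finite_subset[of _ "{w. d1 w \<noteq> 0} \<union> {w. d2 w \<noteq> 0}"]) auto

lemma fs_smult: "fs d \<Longrightarrow> fs (\<lambda>w. c * d w)"
  unfolding fs_def by (rule finite_subset[of _ "{w. d w \<noteq> 0}"]) auto

lemma fs_zero: "fs (\<lambda>w. 0)" unfolding fs_def by simp

lemma fs_sum: "finite I \<Longrightarrow> (\<And>i. i \<in> I \<Longrightarrow> fs (d i)) \<Longrightarrow> fs (\<lambda>w. \<Sum>i\<in>I. d i w)"
  by (induction I rule: finite_induct) (auto simp: fs_zero intro!: fs_add)

lemma fs_delta: "fs (\<lambda>w. if w = u then c else 0)"
  unfolding fs_def by (rule finite_subset[of _ "{u}"]) auto

lemma lin_add: "fs d1 \<Longrightarrow> fs d2 \<Longrightarrow> lin F (\<lambda>w. d1 w + d2 w) w' = lin F d1 w' + lin F d2 w'"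
proof -
  assume a: "fs d1" "fs d2"
  let ?S = "{w. d1 w \<noteq> 0} \<union> {w. d2 w \<noteq> 0}"
  have f: "finite ?S" using a unfolding fs_def by auto
  show ?thesis
    apply (subst lin_eq[OF f], force)
    apply (subst lin_eq[OF f, of d1], force)
    apply (subst lin_eq[OF f, of d2], force)
    by (simp add: sum.distrib distrib_right)
qed

lemma lin_diff: "fs d1 \<Longrightarrow> fs d2 \<Longrightarrow> lin F (\<lambda>w. d1 w - d2 w) w' = lin F d1 w' - lin F d2 w'"
proof -
  assume a: "fs d1" "fs d2"
  let ?S = "{w. d1 w \<noteq> 0} \<union> {w. d2 w \<noteq> 0}"
  have f: "finite ?S" using a unfolding fs_def by auto
  show ?thesis
    apply (subst lin_eq[OF f], force)
    apply (subst lin_eq[OF f, of d1], force)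
    apply (subst lin_eq[OF f, of d2], force)
    by (simp add: sum_subtractf left_diff_distrib)
qed

lemma lin_smult: "fs d \<Longrightarrow> lin F (\<lambda>w. c * d w) w' = c * lin F d w'"
proof -
  assume a: "fs d"
  have f: "finite {w. d w \<noteq> 0}" using a unfolding fs_def by auto
  show ?thesis
    apply (subst lin_eq[OF f], force)
    apply (subst lin_eq[OF f, of d], force)
    by (simp add: sum_distrib_left mult.assoc)
qed

lemma lin_zero: "lin F (\<lambda>w. 0) w' = 0" unfolding lin_def by simp

lemma lin_sum: "finite I \<Longrightarrow> (\<And>i. i \<in> I \<Longrightarrow> fs (d i)) \<Longrightarrow>
   lin F (\<lambda>w. \<Sum>i\<in>I. d i w) w' = (\<Sum>i\<in>I. lin F (d i) w')"
proof (induction I rule: finite_induct)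
  case empty then show ?case by (simp add: lin_zero)
next
  case (insert i I)
  have "lin F (\<lambda>w. \<Sum>i\<in>insert i I. d i w) w' = lin F (\<lambda>w. d i w + (\<Sum>i\<in>I. d i w)) w'"
    using insert by simp
  also have "\<dots> = lin F (d i) w' + lin F (\<lambda>w. \<Sum>i\<in>I. d i w) w'"
    by (rule lin_add) (use insert in \<open>auto intro!: fs_sum\<close>)
  finally show ?case using insert by simp
qed

lemma lin_delta: "lin F (\<lambda>w. if w = u then c else 0) w' = c * F u w'"
proof -
  have "lin F (\<lambda>w. if w = u then c else 0) w' = (\<Sum>w\<in>{u}. (if w = u then c else 0) * F w w')"
    by (rule lin_eq) auto
  then show ?thesis by simp
qed

lemma lin_Fadd: "lin (\<lambda>w w'. F w w' + G w w') d w' = lin F d w' + lin G d w'"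
  unfolding lin_def by (simp add: sum.distrib distrib_left)

lemma lin_Fsmult: "lin (\<lambda>w w'. c * F w w') d w' = c * lin F d w'"
  unfolding lin_def by (simp add: sum_distrib_left mult.left_commute)

lemma lin_cong: "(\<And>w. d w \<noteq> 0 \<Longrightarrow> F w = G w) \<Longrightarrow> lin F d = lin G d"
  unfolding lin_def by (rule ext, rule sum.cong) auto

lemma lin_fs: "fs d \<Longrightarrow> (\<And>w. d w \<noteq> 0 \<Longrightarrow> fs (F w)) \<Longrightarrow> fs (lin F d)"
proof -
  assume a: "fs d" "\<And>w. d w \<noteq> 0 \<Longrightarrow> fs (F w)"
  have "{w'. lin F d w' \<noteq> 0} \<subseteq> (\<Union>w\<in>{w. d w \<noteq> 0}. {w'. F w w' \<noteq> 0})"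
    using lin_supp by fastforce
  moreover have "finite (\<Union>w\<in>{w. d w \<noteq> 0}. {w'. F w w' \<noteq> 0})"
    using a unfolding fs_def by auto
  ultimately show ?thesis unfolding fs_def by (rule finite_subset)
qed

lemma lin_comp:
  assumes d: "fs d" and G: "\<And>w. d w \<noteq> 0 \<Longrightarrow> fs (G w)"
  shows "lin F (lin G d) w' = lin (\<lambda>w. lin F (G w)) d w'"
proof -
  let ?T = "(\<Union>w\<in>{w. d w \<noteq> 0}. {v. G w v \<noteq> 0})"
  have fT: "finite ?T" using d G unfolding fs_def by auto
  have sub: "{v. lin G d v \<noteq> 0} \<subseteq> ?T" using lin_supp by fastforce
  have fd: "finite {w. d w \<noteq> 0}" using d unfolding fs_def .
  have "lin F (lin G d) w' = (\<Sum>v\<in>?T. lin G d v * F v w')" by (rule lin_eq[OF fT sub])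
  also have "\<dots> = (\<Sum>v\<in>?T. (\<Sum>w | d w \<noteq> 0. d w * G w v) * F v w')"
    unfolding lin_def ..
  also have "\<dots> = (\<Sum>w | d w \<noteq> 0. d w * (\<Sum>v\<in>?T. G w v * F v w'))"
    apply (simp only: sum_distrib_right sum_distrib_left mult.assoc)
    by (rule sum.swap)
  also have "\<dots> = (\<Sum>w | d w \<noteq> 0. d w * lin F (G w) w')"
    by (rule sum.cong[OF refl], subst lin_eq[OF fT]) auto
  also have "\<dots> = lin (\<lambda>w. lin F (G w)) d w'" unfolding lin_def ..
  finally show ?thesis .
qed

lemma lin_id: assumes "fs d" shows "lin (\<lambda>w w'. if w' = w then 1 else 0) d = d"
proof
  fix w'
  show "lin (\<lambda>w w'. if w' = w then 1 else 0) d w' = d w'"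
  proof (cases "d w' = 0")
    case True then show ?thesis unfolding lin_def by (simp only: True) (intro sum.neutral, use True in auto)
  next
    case False
    have "lin (\<lambda>w w'. if w' = w then 1 else 0) d w' = (\<Sum>w\<in>{w'}. d w * (if w' = w then 1 else 0))"
      unfolding lin_def by (rule sum.mono_neutral_right) (use False \<open>fs d\<close> in \<open>auto simp: fs_def\<close>)
    then show ?thesis by simp
  qed
qed


lemma carrier_fs: "f \<in> fa_carrier \<longleftrightarrow> fs f"
  unfolding fa_carrier_def fs_def by simp

lemma fa_word_app: "fa_word u w = (if w = u then 1 else 0)"
  unfolding fa_word_def by simp

lemma fs_word: "fs (fa_word u)"
  unfolding fa_word_def by (rule fs_delta)

definition shift :: "('b) list \<Rightarrow> ('b list \<Rightarrow> complex) \<Rightarrow> 'b list \<Rightarrow> complex" where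
  "shift u f w = (if take (length u) w = u then f (drop (length u) w) else 0)"

lemma fa_mul_word_left: "fa_mul (fa_word u) f = shift u f"
proof
  fix w
  have "fa_mul (fa_word u) f w = (\<Sum>i\<le>length w. (if take i w = u then 1 else 0) * f (drop i w))"
    unfolding fa_mul_def fa_word_def by simp
  also have "\<dots> = (\<Sum>i\<in>{i. i \<le> length w \<and> i = length u \<and> take (length u) w = u}. f (drop i w))"
    by (rule sum.mono_neutral_cong_right) auto
  also have "\<dots> = shift u f w"
  proof (cases "take (length u) w = u")
    case True
    then have "min (length w) (length u) = length u" by (metis length_take)
    then have "length u \<le> length w" by (simp add: min_def split: if_splits)
    then have "{i. i \<le> length w \<and> i = length u \<and> take (length u) w = u} = {length u}" using True by auto
    then show ?thesis using True unfolding shift_def by simp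
  qed (simp add: shift_def)
  finally show "fa_mul (fa_word u) f w = shift u f w" .
qed

lemma shift_word: "shift u (fa_word v) = fa_word (u @ v)"
proof
  fix w show "shift u (fa_word v) w = fa_word (u @ v) w"
    unfolding shift_def fa_word_def
    by (auto simp: append_take_drop_id dest: sym[of w]) (metis append_take_drop_id)
qed

lemma fa_mul_word: "fa_mul (fa_word u) (fa_word v) = fa_word (u @ v)"
  by (simp add: fa_mul_word_left shift_word)

lemma shift_Cons: "shift (g # u) f = shift [g] (shift u f)"
proof
  fix w show "shift (g # u) f w = shift [g] (shift u f) w"
    unfolding shift_def by (cases w) auto
qed

lemma fa_mul_fs: assumes "fs f" "fs g" shows "fs (fa_mul f g)"
proof -
  let ?S = "(\<lambda>(u,v). u @ v) ` ({u. f u \<noteq> 0} \<times> {v. g v \<noteq> 0})"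
  have "{w. fa_mul f g w \<noteq> 0} \<subseteq> ?S"
  proof
    fix w assume "w \<in> {w. fa_mul f g w \<noteq> 0}"
    then obtain i where "f (take i w) * g (drop i w) \<noteq> 0"
      unfolding fa_mul_def by (auto elim: sum.not_neutral_contains_not_neutral)
    then show "w \<in> ?S"
      by (auto intro!: image_eqI[of _ _ "(take i w, drop i w)"])
  qed
  moreover have "finite ?S" using assms unfolding fs_def by auto
  ultimately show ?thesis unfolding fs_def by (rule finite_subset)
qed

lemma fa_mul_add_left: "fa_mul (\<lambda>w. f w + g w) h = (\<lambda>w. fa_mul f h w + fa_mul g h w)"
  unfolding fa_mul_def by (simp add: distrib_right sum.distrib)
lemma fa_mul_add_right: "fa_mul h (\<lambda>w. f w + g w) = (\<lambda>w. fa_mul h f w + fa_mul h g w)"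
  unfolding fa_mul_def by (simp add: distrib_left sum.distrib)
lemma fa_mul_diff_left: "fa_mul (\<lambda>w. f w - g w) h = (\<lambda>w. fa_mul f h w - fa_mul g h w)"
  unfolding fa_mul_def by (simp add: left_diff_distrib sum_subtractf)
lemma fa_mul_diff_right: "fa_mul h (\<lambda>w. f w - g w) = (\<lambda>w. fa_mul h f w - fa_mul h g w)"
  unfolding fa_mul_def by (simp add: right_diff_distrib sum_subtractf)
lemma fa_mul_smult_left: "fa_mul (\<lambda>w. c * f w) h = (\<lambda>w. c * fa_mul f h w)"
  unfolding fa_mul_def by (simp add: sum_distrib_left mult.assoc)
lemma fa_mul_smult_right: "fa_mul h (\<lambda>w. c * f w) = (\<lambda>w. c * fa_mul h f w)"
  unfolding fa_mul_def by (simp add: sum_distrib_left mult.left_commute)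
lemma fa_mul_zero_left: "fa_mul (\<lambda>w. 0) h = (\<lambda>w. 0)"
  unfolding fa_mul_def by simp
lemma fa_mul_zero_right: "fa_mul h (\<lambda>w. 0) = (\<lambda>w. 0)"
  unfolding fa_mul_def by simp

lemma fa_mul_lin_left:
  assumes "fs f"
  shows "fa_mul f g = lin (\<lambda>u. fa_mul (fa_word u) g) f"
proof
  fix w
  let ?S = "{u. f u \<noteq> 0}"
  have fS: "finite ?S" using assms unfolding fs_def .
  have "lin (\<lambda>u. fa_mul (fa_word u) g) f w =
        (\<Sum>u\<in>?S. f u * (\<Sum>i\<le>length w. (if take i w = u then 1 else 0) * g (drop i w)))"
    unfolding lin_def fa_mul_def fa_word_def by simp
  also have "\<dots> = (\<Sum>i\<le>length w. \<Sum>u\<in>?S. f u * ((if take i w = u then 1 else 0) * g (drop i w)))"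
    by (simp only: sum_distrib_left) (rule sum.swap)
  also have "\<dots> = (\<Sum>i\<le>length w. f (take i w) * g (drop i w))"
  proof (rule sum.cong[OF refl])
    fix i
    have "(\<Sum>u\<in>?S. f u * ((if take i w = u then 1 else 0) * g (drop i w))) =
          (\<Sum>u\<in>?S. (if take i w = u then f u * g (drop i w) else 0))"
      by (rule sum.cong) auto
    also have "\<dots> = (if take i w \<in> ?S then f (take i w) * g (drop i w) else 0)"
      using sum.delta'[OF fS, of "take i w" "\<lambda>u. f u * g (drop i w)"] by simp
    also have "\<dots> = f (take i w) * g (drop i w)" by auto
    finally show "(\<Sum>u\<in>?S. f u * ((if take i w = u then 1 else 0) * g (drop i w))) = f (take i w) * g (drop i w)" .
  qed
  finally show "fa_mul f g w = lin (\<lambda>u. fa_mul (fa_word u) g) f w"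
    unfolding fa_mul_def by simp
qed

definition sw :: "('a + 'a) list \<Rightarrow> ('a + 'a) list" where
  "sw w = rev (map swap_gen w)"

lemma swap_gen_swap_gen[simp]: "swap_gen (swap_gen g) = g"
  by (cases g) auto

lemma sw_sw[simp]: "sw (sw w) = w"
  unfolding sw_def by (simp add: rev_map comp_def)

lemma sw_len[simp]: "length (sw w) = length w"
  unfolding sw_def by simp

lemma sw_inj: "sw u = sw v \<longleftrightarrow> u = v"
  by (metis sw_sw)

lemma fa_star_app: "fa_star f w = cnj (f (sw w))"
  unfolding fa_star_def sw_def by simp

lemma fa_star_word: "fa_star (fa_word u) = fa_word (sw u)"
proof
  fix w
  have "sw w = u \<longleftrightarrow> w = sw u" by (metis sw_sw)
  then show "fa_star (fa_word u) w = fa_word (sw u) w"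
    unfolding fa_star_app fa_word_app by simp
qed

lemma fa_star_fs: "fs f \<Longrightarrow> fs (fa_star f)"
proof -
  assume "fs f"
  have "{w. fa_star f w \<noteq> 0} = sw ` {w. f w \<noteq> 0}"
    unfolding fa_star_app by (auto intro!: image_eqI[of _ sw] simp: image_iff)
  then show ?thesis using \<open>fs f\<close> unfolding fs_def by simp
qed

lemma take_sw: "take i (sw w) = sw (drop (length w - i) w)"
  unfolding sw_def by (simp add: take_rev drop_map)

lemma drop_sw: "drop i (sw w) = sw (take (length w - i) w)"
  unfolding sw_def by (simp add: drop_rev take_map)

lemma fa_star_mul: fixes f g :: "('x + 'x) list \<Rightarrow> complex"
  shows "fa_star (fa_mul f g) = fa_mul (fa_star g) (fa_star f)"
proof
  fix w :: "('x + 'x) list"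
  let ?n = "length w"
  have "fa_star (fa_mul f g) w = (\<Sum>i\<le>?n. cnj (f (sw (drop (?n - i) w))) * cnj (g (sw (take (?n - i) w))))"
    unfolding fa_star_app fa_mul_def by (simp add: take_sw drop_sw)
  also have "\<dots> = (\<Sum>j\<le>?n. cnj (f (sw (drop j w))) * cnj (g (sw (take j w))))"
    by (rule sum.reindex_bij_witness[where i="\<lambda>j. ?n - j" and j="\<lambda>i. ?n - i"]) auto
  also have "\<dots> = fa_mul (fa_star g) (fa_star f) w"
    unfolding fa_star_app fa_mul_def by (simp add: mult.commute)
  finally show "fa_star (fa_mul f g) w = fa_mul (fa_star g) (fa_star f) w" .
qed

lemma fa_star_star[simp]: "fa_star (fa_star f) = f"
  unfolding fa_star_def[abs_def] sw_def[symmetric] by simp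


lemma fa_add_app: "fa_add f g = (\<lambda>w. f w + g w)" unfolding fa_add_def ..
lemma fa_diff_app: "fa_diff f g = (\<lambda>w. f w - g w)" unfolding fa_diff_def ..
lemma fa_smult_app: "fa_smult c f = (\<lambda>w. c * f w)" unfolding fa_smult_def ..

lemma fs_one: "fs fa_one" unfolding fa_one_def by (rule fs_word)

lemma I_fs: "f \<in> dbl_ideal \<Longrightarrow> fs f"
proof (induction rule: dbl_ideal.induct)
  case (rel r)
  then show ?case unfolding dbl_rels_def fa_add_app fa_diff_app fa_smult_app fa_one_def
    by (auto intro!: fs_diff fs_add fs_smult fs_word)
qed (auto simp: fa_add_app fa_smult_app carrier_fs intro!: fs_zero fs_add fs_smult fa_mul_fs)

lemma I_zero: "(\<lambda>w. 0) \<in> dbl_ideal" by (rule dbl_ideal.zero)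
lemma I_add: "f \<in> dbl_ideal \<Longrightarrow> g \<in> dbl_ideal \<Longrightarrow> (\<lambda>w. f w + g w) \<in> dbl_ideal"
  using dbl_ideal.add unfolding fa_add_app .
lemma I_smult: "f \<in> dbl_ideal \<Longrightarrow> (\<lambda>w. c * f w) \<in> dbl_ideal"
  using dbl_ideal.smult unfolding fa_smult_app .
lemma I_diff: "f \<in> dbl_ideal \<Longrightarrow> g \<in> dbl_ideal \<Longrightarrow> (\<lambda>w. f w - g w) \<in> dbl_ideal"
  using I_add[OF _ I_smult[of g "-1"]] by simp
lemma I_neg: "f \<in> dbl_ideal \<Longrightarrow> (\<lambda>w. - f w) \<in> dbl_ideal"
  using I_smult[of f "-1"] by simp
lemma I_mul_left: "f \<in> dbl_ideal \<Longrightarrow> fs g \<Longrightarrow> fa_mul g f \<in> dbl_ideal"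
  using dbl_ideal.mult_left carrier_fs by blast
lemma I_mul_right: "f \<in> dbl_ideal \<Longrightarrow> fs g \<Longrightarrow> fa_mul f g \<in> dbl_ideal"
  using dbl_ideal.mult_right carrier_fs by blast
lemma I_sum: "finite S \<Longrightarrow> (\<And>i. i \<in> S \<Longrightarrow> f i \<in> dbl_ideal) \<Longrightarrow> (\<lambda>w. \<Sum>i\<in>S. f i w) \<in> dbl_ideal"
  by (induction S rule: finite_induct) (auto intro: I_zero I_add)
lemma I_rel: "r \<in> dbl_rels \<Longrightarrow> r \<in> dbl_ideal" by (rule dbl_ideal.rel)
lemma I_cong: "f \<in> dbl_ideal \<Longrightarrow> f = g \<Longrightarrow> g \<in> dbl_ideal" by simp

lemma deq_def2: "dbl_eq f g \<longleftrightarrow> (\<lambda>w. f w - g w) \<in> dbl_ideal"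
  unfolding dbl_eq_def fa_diff_app ..

lemma deq_refl: "dbl_eq f f" unfolding deq_def2 by (simp add: I_zero)
lemma deq_sym: "dbl_eq f g \<Longrightarrow> dbl_eq g f" unfolding deq_def2 using I_neg by fastforce
lemma deq_trans: "dbl_eq f g \<Longrightarrow> dbl_eq g h \<Longrightarrow> dbl_eq f h"
  unfolding deq_def2 using I_add by fastforce
lemma deq_add: "dbl_eq f f' \<Longrightarrow> dbl_eq g g' \<Longrightarrow> dbl_eq (\<lambda>w. f w + g w) (\<lambda>w. f' w + g' w)"
  unfolding deq_def2 by (drule (1) I_add) (simp add: algebra_simps)
lemma deq_diff: "dbl_eq f f' \<Longrightarrow> dbl_eq g g' \<Longrightarrow> dbl_eq (\<lambda>w. f w - g w) (\<lambda>w. f' w - g' w)"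
  unfolding deq_def2 by (drule (1) I_diff) (simp add: algebra_simps)
lemma deq_smult: "dbl_eq f f' \<Longrightarrow> dbl_eq (\<lambda>w. c * f w) (\<lambda>w. c * f' w)"
  unfolding deq_def2 by (drule I_smult[where c=c]) (simp add: algebra_simps)
lemma deq_sum: "finite S \<Longrightarrow> (\<And>i. i \<in> S \<Longrightarrow> dbl_eq (f i) (g i)) \<Longrightarrow>
   dbl_eq (\<lambda>w. \<Sum>i\<in>S. f i w) (\<lambda>w. \<Sum>i\<in>S. g i w)"
  by (induction S rule: finite_induct) (auto intro: deq_add deq_refl)
lemma deq_mul_left: "fs h \<Longrightarrow> dbl_eq f f' \<Longrightarrow> dbl_eq (fa_mul h f) (fa_mul h f')"
  unfolding deq_def2 by (drule (1) I_mul_left) (simp add: fa_mul_diff_right)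
lemma deq_mul_right: "fs h \<Longrightarrow> dbl_eq f f' \<Longrightarrow> dbl_eq (fa_mul f h) (fa_mul f' h)"
  unfolding deq_def2 by (drule (1) I_mul_right) (simp add: fa_mul_diff_left)
lemma deq_I: "dbl_eq f g \<longleftrightarrow> (\<lambda>w. f w - g w) \<in> dbl_ideal" by (rule deq_def2)
lemma deq_eq: "f = g \<Longrightarrow> dbl_eq f g" by (simp add: deq_refl)

lemma fa_star_add: "fa_star (\<lambda>w. f w + g w) = (\<lambda>w. fa_star f w + fa_star g w)"
  unfolding fa_star_def by simp
lemma fa_star_diff: "fa_star (\<lambda>w. f w - g w) = (\<lambda>w. fa_star f w - fa_star g w)"
  unfolding fa_star_def by simp
lemma fa_star_smult: "fa_star (\<lambda>w. c * f w) = (\<lambda>w. cnj c * fa_star f w)"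
  unfolding fa_star_def by simp
lemma fa_star_zero: "fa_star (\<lambda>w. 0) = (\<lambda>w. 0)"
  unfolding fa_star_def by simp
lemma sw_single: "sw [Inl a] = [Inr a]" "sw [Inr a] = [Inl a]"
  "sw [Inl a, Inl b] = [Inr b, Inr a]" "sw [Inr a, Inr b] = [Inl b, Inl a]" "sw [] = []"
  unfolding sw_def by auto

lemma fa_star_ops: "fa_star (fa_diff f g) = fa_diff (fa_star f) (fa_star g)"
  "fa_star (fa_add f g) = fa_add (fa_star f) (fa_star g)"
  "fa_star (fa_smult c f) = fa_smult (cnj c) (fa_star f)"
  "fa_star fa_one = fa_one"
  unfolding fa_add_app fa_diff_app fa_smult_app fa_one_def
  by (auto simp: fa_star_add fa_star_diff fa_star_smult fa_star_word sw_single)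

lemma rels_mem:
  "fa_diff (fa_word [Inl (a + b)]) (fa_add (fa_word [Inl a]) (fa_word [Inl b])) \<in> dbl_rels"
  "fa_diff (fa_word [Inl (cscale c a)]) (fa_smult c (fa_word [Inl a])) \<in> dbl_rels"
  "fa_diff (fa_word [Inl a, Inl b]) (fa_word [Inl (a * b)]) \<in> dbl_rels"
  "fa_diff (fa_word [Inl 1]) fa_one \<in> dbl_rels"
  "fa_diff (fa_word [Inr (a + b)]) (fa_add (fa_word [Inr a]) (fa_word [Inr b])) \<in> dbl_rels"
  "fa_diff (fa_word [Inr (cscale c a)]) (fa_smult (cnj c) (fa_word [Inr a])) \<in> dbl_rels"
  "fa_diff (fa_word [Inr a, Inr b]) (fa_word [Inr (b * a)]) \<in> dbl_rels"
  "fa_diff (fa_word [Inr 1]) fa_one \<in> dbl_rels"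
  unfolding dbl_rels_def by blast+

lemma star_rel: assumes "r \<in> dbl_rels" shows "fa_star r \<in> dbl_rels"
  using assms[unfolded dbl_rels_def]
  apply (elim UnE CollectE exE conjE singletonE insertE)
  by (simp_all only: fa_star_ops fa_star_word sw_single complex_cnj_cnj rels_mem)

lemma I_star: "f \<in> dbl_ideal \<Longrightarrow> fa_star f \<in> dbl_ideal"
proof (induction rule: dbl_ideal.induct)
  case (rel r) then show ?case by (simp add: I_rel star_rel)
next
  case zero then show ?case by (simp add: fa_star_zero I_zero)
next
  case (add f g) then show ?case by (simp add: fa_add_app fa_star_add I_add)
next
  case (smult f c) then show ?case by (simp add: fa_smult_app fa_star_smult I_smult)
next
  case (mult_left f g) then show ?case
    by (simp add: fa_star_mul I_mul_right fa_star_fs carrier_fs)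
next
  case (mult_right f g) then show ?case
    by (simp add: fa_star_mul I_mul_left fa_star_fs carrier_fs)
qed

lemma deq_star: "dbl_eq f g \<Longrightarrow> dbl_eq (fa_star f) (fa_star g)"
  unfolding deq_def2 by (drule I_star) (simp add: fa_star_diff)


fun base :: "'a + 'a \<Rightarrow> 'a" where "base (Inl a) = a" | "base (Inr a) = a"
fun mk :: "bool \<Rightarrow> 'a \<Rightarrow> 'a + 'a" where "mk True c = Inl c" | "mk False c = Inr c"
definition sc :: "bool \<Rightarrow> complex \<Rightarrow> complex" where "sc s z = (if s then z else cnj z)"
definition mul :: "bool \<Rightarrow> 'a::cplx_unital_alg \<Rightarrow> 'a \<Rightarrow> 'a" where
  "mul s a b = (if s then a * b else b * a)"
definition Bp :: "'a::cplx_unital_alg set" where "Bp = Bs - {1}"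
definition nst :: "bool \<Rightarrow> ('a + 'a) list \<Rightarrow> bool" where
  "nst s t \<longleftrightarrow> (case t of [] \<Rightarrow> True | h # _ \<Rightarrow> isl h \<noteq> s)"
definition red :: "('a::cplx_unital_alg + 'a) list \<Rightarrow> bool" where
  "red w \<longleftrightarrow> (\<forall>g\<in>set w. base g \<in> Bp) \<and> successively (\<lambda>g h. isl g \<noteq> isl h) w"

definition expand :: "bool \<Rightarrow> 'a::cplx_unital_alg \<Rightarrow> ('a + 'a) list \<Rightarrow> 'a fa" where
  "expand s x t = (\<lambda>w. (if w = t then sc s (coord x 1) else 0) +
     (case w of [] \<Rightarrow> 0 | g # t' \<Rightarrow> if t' = t \<and> isl g = s \<and> base g \<noteq> 1 then sc s (coord x (base g)) else 0))"

definition act :: "'a::cplx_unital_alg + 'a \<Rightarrow> ('a + 'a) list \<Rightarrow> 'a fa" where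
  "act g w = (case w of [] \<Rightarrow> expand (isl g) (base g) []
     | h # t \<Rightarrow> if isl h = isl g then expand (isl g) (mul (isl g) (base g) (base h)) t
               else expand (isl g) (base g) w)"

definition op :: "'a::cplx_unital_alg + 'a \<Rightarrow> 'a fa \<Rightarrow> 'a fa" where
  "op g = lin (act g)"

definition D :: "'a::cplx_unital_alg fa \<Rightarrow> bool" where
  "D d \<longleftrightarrow> fs d \<and> (\<forall>w. d w \<noteq> 0 \<longrightarrow> red w)"

lemma isl_mk[simp]: "isl (mk s c) = s" by (cases s) auto
lemma base_mk[simp]: "base (mk s c) = c" by (cases s) auto
lemma mk_isl_base: "mk (isl g) (base g) = g" by (cases g) auto
lemma mk_inj[simp]: "mk s c = mk s' c' \<longleftrightarrow> s = s' \<and> c = c'"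
  by (cases s; cases s') auto
lemma mk_eq_iff: "g = mk s c \<longleftrightarrow> isl g = s \<and> base g = c"
  by (cases g; cases s) auto

lemma red_Nil[simp]: "red []" unfolding red_def by simp
lemma red_Cons: "red (g # t) \<longleftrightarrow> base g \<in> Bp \<and> nst (isl g) t \<and> red t"
  unfolding red_def nst_def by (cases t) (auto simp: successively_Cons)

lemma sc_add: "sc s (a + b) = sc s a + sc s b" unfolding sc_def by auto
lemma sc_mult: "sc s (a * b) = sc s a * sc s b" unfolding sc_def by auto
lemma sc_zero[simp]: "sc s 0 = 0" unfolding sc_def by auto
lemma sc_one[simp]: "sc s 1 = 1" unfolding sc_def by auto
lemma sc_sum: "sc s (\<Sum>i\<in>I. f i) = (\<Sum>i\<in>I. sc s (f i))" unfolding sc_def by auto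

lemma Bp_Bs: "c \<in> Bp \<Longrightarrow> c \<in> Bs" and Bp_ne1: "c \<in> Bp \<Longrightarrow> c \<noteq> 1"
  unfolding Bp_def by auto

lemma expand_fs: "fs (expand s x t)"
proof -
  have "{w. expand s x t w \<noteq> 0} \<subseteq> insert t ((\<lambda>c. mk s c # t) ` {c. coord x c \<noteq> 0})"
  proof
    fix w assume "w \<in> {w. expand s x t w \<noteq> 0}"
    then show "w \<in> insert t ((\<lambda>c. mk s c # t) ` {c. coord x c \<noteq> 0})"
      unfolding expand_def
      by (cases w) (auto split: if_splits simp: image_iff mk_eq_iff sc_def)
  qed
  then show ?thesis unfolding fs_def by (rule finite_subset) (simp add: coord_fin)
qed

lemma expand_red: "red t \<Longrightarrow> nst s t \<Longrightarrow> expand s x t w \<noteq> 0 \<Longrightarrow> red w"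
  unfolding expand_def
  by (cases w) (auto split: if_splits simp: red_Cons Bp_def coord_nz sc_def)

lemma expand_len: "expand s x t w \<noteq> 0 \<Longrightarrow> length w \<le> Suc (length t)"
  unfolding expand_def by (cases w) (auto split: if_splits)

context
  assumes nt: "(1::'a::cplx_unital_alg) \<noteq> 0"
begin

lemma expand_add: "expand s ((x::'a) + y) t w = expand s x t w + expand s y t w"
  unfolding expand_def by (cases w) (auto simp: coord_add[OF nt] sc_add)

lemma expand_scale: "expand s (cscale r (x::'a)) t w = sc s r * expand s x t w"
  unfolding expand_def by (cases w) (auto simp: coord_scale[OF nt] sc_mult distrib_left)

lemma expand_zero: "expand s (0::'a) t w = 0"
  unfolding expand_def by (cases w) (auto simp: coord_zero[OF nt])

lemma expand_sum: "finite I \<Longrightarrow> expand s (\<Sum>i\<in>I. (f i::'a)) t w = (\<Sum>i\<in>I. expand s (f i) t w)"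
  by (induction I rule: finite_induct) (auto simp: expand_zero expand_add)

lemma expand_basis: "(c::'a) \<in> Bp \<Longrightarrow> expand s c t = fa_word (mk s c # t)"
proof
  fix w assume c: "c \<in> Bp"
  show "expand s c t w = fa_word (mk s c # t) w"
    unfolding expand_def fa_word_app using c
    by (cases w) (auto simp: coord_basis[OF nt] Bp_def mk_eq_iff)
qed

lemma expand_one: "expand s (1::'a) t = fa_word t"
proof
  fix w show "expand s (1::'a) t w = fa_word t w"
    unfolding expand_def fa_word_app
    by (cases w) (auto simp: coord_one[OF nt])
qed

lemma expand_as_sum:
  fixes x :: 'a
  defines "S \<equiv> {c. coord x c \<noteq> 0} - {1}"
  shows "expand s x t = (\<lambda>w. sc s (coord x 1) * fa_word t w + (\<Sum>c\<in>S. sc s (coord x c) * fa_word (mk s c # t) w))"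
proof
  fix w
  have fS: "finite S" unfolding S_def using coord_fin by auto
  have "(\<Sum>c\<in>S. sc s (coord x c) * fa_word (mk s c # t) w) =
        (case w of [] \<Rightarrow> 0 | g # t' \<Rightarrow> if t' = t \<and> isl g = s \<and> base g \<noteq> 1 then sc s (coord x (base g)) else 0)"
  proof (cases w)
    case Nil then show ?thesis by (simp add: fa_word_app)
  next
    case (Cons g t')
    have "(\<Sum>c\<in>S. sc s (coord x c) * fa_word (mk s c # t) w) =
          (\<Sum>c\<in>S. if c = base g then (if t' = t \<and> isl g = s then sc s (coord x c) else 0) else 0)"
      by (rule sum.cong) (auto simp: fa_word_app Cons mk_eq_iff)
    also have "\<dots> = (if base g \<in> S then (if t' = t \<and> isl g = s then sc s (coord x (base g)) else 0) else 0)"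
      by (rule sum.delta[OF fS])
    also have "\<dots> = (if t' = t \<and> isl g = s \<and> base g \<noteq> 1 then sc s (coord x (base g)) else 0)"
      by (auto simp: S_def)
    finally show ?thesis by (simp add: Cons)
  qed
  then show "expand s x t w = sc s (coord x 1) * fa_word t w + (\<Sum>c\<in>S. sc s (coord x c) * fa_word (mk s c # t) w)"
    unfolding expand_def by (simp add: fa_word_app)
qed

lemma mul_sum_right: "mul s a (\<Sum>c\<in>S. cscale (f c) (g c)) = (\<Sum>c\<in>S. cscale (f c) (mul s (a::'a) (g c)))"
  unfolding mul_def by (simp add: sum_distrib_left sum_distrib_right cscale_mult_left cscale_mult_right)

lemma mul_assoc: "mul s (mul s a b) (c::'a) = mul s a (mul s b c)"
  unfolding mul_def by (simp add: mult.assoc)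

lemma mul_one_left[simp]: "mul s 1 (a::'a) = a" unfolding mul_def by simp
lemma mul_one_right[simp]: "mul s a (1::'a) = a" unfolding mul_def by simp
lemma mul_add_left: "mul s (a + b) (c::'a) = mul s a c + mul s b c"
  unfolding mul_def by (simp add: distrib_left distrib_right)
lemma mul_scale_left: "mul s (cscale r a) (c::'a) = cscale r (mul s a c)"
  unfolding mul_def by (simp add: cscale_mult_left cscale_mult_right)

lemma op_expand:
  fixes a x :: 'a
  assumes t: "red t" "nst s t"
  shows "op (mk s a) (expand s x t) = expand s (mul s a x) t"
proof
  fix w'
  define S where "S \<equiv> {c. coord x c \<noteq> 0} - {1}"
  have fS: "finite S" unfolding S_def using coord_fin by auto
  have e: "expand s x t = (\<lambda>w. sc s (coord x 1) * fa_word t w + (\<Sum>c\<in>S. sc s (coord x c) * fa_word (mk s c # t) w))"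
    unfolding S_def by (rule expand_as_sum)
  have act1: "act (mk s a) t = expand s a t"
    using t unfolding act_def nst_def by (cases t) auto
  have act2: "act (mk s a) (mk s c # t) = expand s (mul s a c) t" for c
    unfolding act_def by simp
  have "op (mk s a) (expand s x t) w' =
        lin (act (mk s a)) (\<lambda>w. sc s (coord x 1) * fa_word t w) w' +
        lin (act (mk s a)) (\<lambda>w. \<Sum>c\<in>S. sc s (coord x c) * fa_word (mk s c # t) w) w'"
    unfolding op_def e
    by (rule lin_add) (auto intro!: fs_smult fs_word fs_sum fS)
  also have "\<dots> = sc s (coord x 1) * expand s a t w' +
       (\<Sum>c\<in>S. sc s (coord x c) * expand s (mul s a c) t w')"
    apply (subst lin_smult, rule fs_word)
    apply (subst lin_sum[OF fS], rule fs_smult, rule fs_word)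
    apply (subst lin_smult, rule fs_word)
    apply (simp add: fa_word_def lin_delta act1 act2)
    done
  also have "\<dots> = expand s (cscale (coord x 1) a + (\<Sum>c\<in>S. cscale (coord x c) (mul s a c))) t w'"
    by (simp add: expand_add expand_sum[OF fS] expand_scale)
  also have "cscale (coord x 1) a + (\<Sum>c\<in>S. cscale (coord x c) (mul s a c)) = mul s a x"
  proof -
    have "x = (\<Sum>c\<in>insert 1 S. cscale (coord x c) c)"
      by (rule coord_expand[OF nt, symmetric]) (auto simp: fS S_def coord_fin)
    also have "\<dots> = cscale (coord x 1) 1 + (\<Sum>c\<in>S. cscale (coord x c) c)"
      by (rule sum.insert[OF fS]) (simp add: S_def)
    finally have "mul s a x = mul s a (cscale (coord x 1) 1 + (\<Sum>c\<in>S. cscale (coord x c) c))" by simp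
    also have "\<dots> = cscale (coord x 1) a + (\<Sum>c\<in>S. cscale (coord x c) (mul s a c))"
      unfolding mul_def by (simp add: distrib_left distrib_right sum_distrib_left sum_distrib_right
          cscale_mult_left cscale_mult_right)
    finally show ?thesis by simp
  qed
  finally show "op (mk s a) (expand s x t) w' = expand s (mul s a x) t w'" .
qed

end


lemma isl_base: "isl g \<Longrightarrow> Inl (base g) = g" "\<not> isl g \<Longrightarrow> Inr (base g) = g"
  by (cases g; auto)+

lemma act_fs: "fs (act g w)"
  unfolding act_def by (cases w) (auto intro: expand_fs)

lemma act_red: assumes "red w" "act g w w' \<noteq> 0" shows "red w'"
proof (cases w)
  case Nil 
  have "expand (isl g) (base g) [] w' \<noteq> 0" using assms(2) unfolding act_def Nil by simp
  then show ?thesis by (rule expand_red[rotated 2]) (auto simp: nst_def)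
next
  case (Cons h t)
  have t: "red t" "nst (isl h) t" using assms(1) unfolding Cons red_Cons by auto
  show ?thesis
  proof (cases "isl h = isl g")
    case True 
    have "expand (isl g) (mul (isl g) (base g) (base h)) t w' \<noteq> 0"
      using assms(2) True unfolding act_def Cons by simp
    then show ?thesis by (rule expand_red[rotated 2]) (use t True in auto)
  next
    case False
    then have n: "nst (isl g) (h # t)" unfolding nst_def by simp
    have "expand (isl g) (base g) (h # t) w' \<noteq> 0"
      using assms(2) False unfolding act_def Cons by simp
    then show ?thesis by (rule expand_red[rotated 2]) (use n assms(1) Cons in auto)
  qed
qed

lemma act_len: "act g w w' \<noteq> 0 \<Longrightarrow> length w' \<le> Suc (length w)"
  unfolding act_def
  by (cases w) (auto split: if_splits dest: expand_len)

lemma fs_D: "D d \<Longrightarrow> fs d" unfolding D_def by simp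
lemma red_D: "D d \<Longrightarrow> d w \<noteq> 0 \<Longrightarrow> red w" unfolding D_def by simp

lemma op_D: assumes "D d" shows "D (op g d)"
proof -
  have "fs (op g d)" unfolding op_def using assms unfolding D_def by (auto intro!: lin_fs act_fs)
  moreover have "red w'" if nz: "op g d w' \<noteq> 0" for w'
  proof -
    obtain w where "d w \<noteq> 0" "act g w w' \<noteq> 0" using lin_supp[OF nz[unfolded op_def]] by blast
    then show ?thesis using assms act_red unfolding D_def by blast
  qed
  ultimately show ?thesis unfolding D_def by blast
qed

lemma op_zero: "op g (\<lambda>w. 0) = (\<lambda>w. 0)"
  unfolding op_def by (rule ext, rule lin_zero)

lemma op_lin: "fs d \<Longrightarrow> (\<And>w. d w \<noteq> 0 \<Longrightarrow> D (G w)) \<Longrightarrow> op g (lin G d) = lin (\<lambda>w. op g (G w)) d"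
  unfolding op_def by (rule ext, rule lin_comp) (auto dest: fs_D)

context
  assumes nt: "(1::'a::cplx_unital_alg) \<noteq> 0"
begin

lemma act_single: "red ((g::'a+'a) # w) \<Longrightarrow> act g w = fa_word (g # w)"
  unfolding act_def
  by (cases w) (auto simp: red_Cons nst_def expand_basis[OF nt] mk_isl_base)

lemma act_add: "act (mk s ((a::'a) + b)) w w' = act (mk s a) w w' + act (mk s b) w w'"
  unfolding act_def by (cases w) (auto simp: expand_add[OF nt] mul_add_left[OF nt])

lemma act_scale: "act (mk s (cscale c (a::'a))) w w' = sc s c * act (mk s a) w w'"
  unfolding act_def by (cases w) (auto simp: expand_scale[OF nt] mul_scale_left[OF nt])

lemma act_one: assumes "red w" shows "act (mk s (1::'a)) w = fa_word w"
proof (cases w)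
  case Nil then show ?thesis unfolding act_def by (simp add: expand_one[OF nt])
next
  case (Cons h t)
  show ?thesis
  proof (cases "isl h = s")
    case True
    have "base h \<in> Bp" using assms Cons by (simp add: red_Cons)
    then have "expand s (base h) t = fa_word (mk s (base h) # t)" by (rule expand_basis[OF nt])
    also have "mk s (base h) = h" using True mk_isl_base[of h] by simp
    finally show ?thesis using True unfolding act_def Cons by (simp add: mul_one_left[OF nt])
  next
    case False then show ?thesis unfolding act_def Cons by (simp add: expand_one[OF nt])
  qed
qed

lemma act_mul: "red w \<Longrightarrow> op (mk s (a::'a)) (act (mk s b) w) = act (mk s (mul s a b)) w"
proof (cases w)
  case Nil
  assume "red w"
  then show ?thesis unfolding act_def Nil
    by (simp add: op_expand[OF nt] nst_def)
next
  case (Cons h t)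
  assume r: "red w"
  then have t: "red t" "nst (isl h) t" using Cons by (auto simp: red_Cons)
  show ?thesis
  proof (cases "isl h = s")
    case True
    then show ?thesis unfolding Cons act_def
      using t by (simp add: op_expand[OF nt] mul_assoc[OF nt])
  next
    case False
    have "nst s (h # t)" using False unfolding nst_def by simp
    then show ?thesis unfolding Cons act_def
      using r False Cons by (simp add: op_expand[OF nt])
  qed
qed

end

fun OPw :: "('a::cplx_unital_alg + 'a) list \<Rightarrow> 'a fa \<Rightarrow> 'a fa" where
  "OPw [] d = d"
| "OPw (g # u) d = op g (OPw u d)"

definition OP :: "'a::cplx_unital_alg fa \<Rightarrow> 'a fa \<Rightarrow> 'a fa" where
  "OP f d = lin (\<lambda>u. OPw u d) f"

definition N :: "'a::cplx_unital_alg fa \<Rightarrow> 'a fa" where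
  "N f = OP f (fa_word [])"

lemma OPw_D: "D d \<Longrightarrow> D (OPw u d)"
  by (induction u) (auto intro: op_D)

lemma OPw_append: "OPw (u @ v) d = OPw u (OPw v d)"
  by (induction u) auto

lemma OPw_zero: "OPw u (\<lambda>w. 0) = (\<lambda>w. 0)"
  by (induction u) (auto simp: op_zero)

lemma OPw_lin: "fs d \<Longrightarrow> (\<And>w. d w \<noteq> 0 \<Longrightarrow> D (G w)) \<Longrightarrow> OPw u (lin G d) = lin (\<lambda>w. OPw u (G w)) d"
proof (induction u)
  case Nil then show ?case by simp
next
  case (Cons g u)
  have "OPw (g # u) (lin G d) = op g (lin (\<lambda>w. OPw u (G w)) d)" using Cons by simp
  also have "\<dots> = lin (\<lambda>w. op g (OPw u (G w))) d"
    by (rule op_lin) (use Cons in \<open>auto intro: OPw_D\<close>)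
  finally show ?case by simp
qed

lemma D_lin: "fs d \<Longrightarrow> (\<And>w. d w \<noteq> 0 \<Longrightarrow> D (G w)) \<Longrightarrow> D (lin G d)"
  unfolding D_def by (auto intro!: lin_fs dest!: lin_supp)

lemma OP_D: "fs f \<Longrightarrow> D d \<Longrightarrow> D (OP f d)"
  unfolding OP_def by (rule D_lin) (auto intro: OPw_D)

lemma OP_word: "OP (fa_word u) d = OPw u d"
  unfolding OP_def fa_word_def by (rule ext, subst lin_delta) simp

lemma OP_add: "fs f \<Longrightarrow> fs g \<Longrightarrow> OP (\<lambda>w. f w + g w) d = (\<lambda>w'. OP f d w' + OP g d w')"
  unfolding OP_def by (rule ext, rule lin_add)

lemma OP_diff: "fs f \<Longrightarrow> fs g \<Longrightarrow> OP (\<lambda>w. f w - g w) d = (\<lambda>w'. OP f d w' - OP g d w')"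
  unfolding OP_def by (rule ext, rule lin_diff)

lemma OP_smult: "fs f \<Longrightarrow> OP (\<lambda>w. c * f w) d = (\<lambda>w'. c * OP f d w')"
  unfolding OP_def by (rule ext, rule lin_smult)

lemma OP_zero: "OP (\<lambda>w. 0) d = (\<lambda>w. 0)"
  unfolding OP_def by (rule ext, rule lin_zero)

lemma OP_zero2: "OP f (\<lambda>w. 0) = (\<lambda>w. 0)"
  unfolding OP_def by (rule ext) (simp add: OPw_zero lin_def)

lemma OP_lin: "fs f \<Longrightarrow> (\<And>w. f w \<noteq> 0 \<Longrightarrow> fs (H w)) \<Longrightarrow> OP (lin H f) d = lin (\<lambda>w. OP (H w) d) f"
  unfolding OP_def by (rule ext, rule lin_comp)

lemma shift_lin: "fs g \<Longrightarrow> shift u g = lin (\<lambda>v. fa_word (u @ v)) g"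
proof
  fix w assume g: "fs g"
  let ?S = "{v. g v \<noteq> 0}"
  have fS: "finite ?S" using g unfolding fs_def .
  have "lin (\<lambda>v. fa_word (u @ v)) g w = (\<Sum>v\<in>?S. g v * fa_word (u @ v) w)"
    unfolding lin_def ..
  also have "\<dots> = (\<Sum>v\<in>?S. if v = drop (length u) w then (if take (length u) w = u then g v else 0) else 0)"
    by (rule sum.cong) (auto simp: fa_word_app, metis append_take_drop_id)
  also have "\<dots> = shift u g w"
    unfolding shift_def by (subst sum.delta[OF fS]) auto
  finally show "shift u g w = lin (\<lambda>v. fa_word (u @ v)) g w" by simp
qed

lemma OP_mul_word: "fs g \<Longrightarrow> D d \<Longrightarrow> OP (fa_mul (fa_word u) g) d = OPw u (OP g d)"
proof -
  assume g: "fs g" and d: "D d"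
  have "OP (fa_mul (fa_word u) g) d = OP (lin (\<lambda>v. fa_word (u @ v)) g) d"
    by (simp add: fa_mul_word_left shift_lin[OF g])
  also have "\<dots> = lin (\<lambda>v. OP (fa_word (u @ v)) d) g"
    by (rule OP_lin[OF g]) (rule fs_word)
  also have "\<dots> = lin (\<lambda>v. OPw u (OPw v d)) g"
    by (simp add: OP_word OPw_append)
  also have "\<dots> = OPw u (OP g d)"
    unfolding OP_def by (rule OPw_lin[symmetric, OF g]) (use d in \<open>auto intro: OPw_D\<close>)
  finally show ?thesis .
qed

lemma OP_mul: "fs f \<Longrightarrow> fs g \<Longrightarrow> D d \<Longrightarrow> OP (fa_mul f g) d = OP f (OP g d)"
proof -
  assume f: "fs f" and g: "fs g" and d: "D d"
  have "OP (fa_mul f g) d = OP (lin (\<lambda>u. fa_mul (fa_word u) g) f) d"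
    by (simp add: fa_mul_lin_left[OF f])
  also have "\<dots> = lin (\<lambda>u. OP (fa_mul (fa_word u) g) d) f"
    by (rule OP_lin[OF f]) (intro fa_mul_fs fs_word g)
  also have "\<dots> = lin (\<lambda>u. OPw u (OP g d)) f"
    by (simp add: OP_mul_word[OF g d])
  also have "\<dots> = OP f (OP g d)" unfolding OP_def ..
  finally show ?thesis .
qed


lemma deq_eq_trans [trans]: "f = g \<Longrightarrow> dbl_eq g h \<Longrightarrow> dbl_eq f h" by simp
lemma deq_trans_eq [trans]: "dbl_eq f g \<Longrightarrow> g = h \<Longrightarrow> dbl_eq f h" by simp
declare deq_trans[trans]

lemma fs_fa_ops: "fs f \<Longrightarrow> fs g \<Longrightarrow> fs (fa_diff f g)" "fs f \<Longrightarrow> fs g \<Longrightarrow> fs (fa_add f g)"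
  "fs f \<Longrightarrow> fs (fa_smult c f)" "fs fa_one"
  unfolding fa_diff_app fa_add_app fa_smult_app
  by (auto intro: fs_diff fs_add fs_smult fs_one)

lemma OP_ops: "fs f \<Longrightarrow> fs g \<Longrightarrow> OP (fa_diff f g) d = (\<lambda>w. OP f d w - OP g d w)"
  "fs f \<Longrightarrow> fs g \<Longrightarrow> OP (fa_add f g) d = (\<lambda>w. OP f d w + OP g d w)"
  "fs f \<Longrightarrow> OP (fa_smult c f) d = (\<lambda>w. c * OP f d w)"
  "OP fa_one d = d"
  unfolding fa_diff_app fa_add_app fa_smult_app fa_one_def
  by (auto simp: OP_diff OP_add OP_smult OP_word)

lemma OP_word1: "OP (fa_word [g]) d = op g d" by (simp add: OP_word)
lemma OP_word2: "OP (fa_word [g, h]) d = op g (op h d)" by (simp add: OP_word)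

context
  assumes nt: "(1::'a::cplx_unital_alg) \<noteq> 0"
begin

lemma op_add: "op (mk s ((a::'a) + b)) d = (\<lambda>w'. op (mk s a) d w' + op (mk s b) d w')"
proof -
  have h: "act (mk s (a + b)) = (\<lambda>w w'. act (mk s a) w w' + act (mk s b) w w')"
    by (intro ext) (rule act_add[OF nt])
  show ?thesis unfolding op_def h by (intro ext) (rule lin_Fadd)
qed

lemma op_scale: "op (mk s (cscale c (a::'a))) d = (\<lambda>w'. sc s c * op (mk s a) d w')"
proof -
  have h: "act (mk s (cscale c a)) = (\<lambda>w w'. sc s c * act (mk s a) w w')"
    by (intro ext) (rule act_scale[OF nt])
  show ?thesis unfolding op_def h by (intro ext) (rule lin_Fsmult)
qed

lemma op_one: "D d \<Longrightarrow> op (mk s (1::'a)) d = d"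
proof -
  assume d: "D d"
  have "op (mk s (1::'a)) d = lin (\<lambda>w w'. if w' = w then 1 else 0) d"
    unfolding op_def
    by (rule lin_cong) (use d in \<open>auto simp: act_one[OF nt] fa_word_def dest: red_D\<close>)
  also have "\<dots> = d" by (rule lin_id[OF fs_D[OF d]])
  finally show ?thesis .
qed

lemma D_act: "red w \<Longrightarrow> D (act g w)"
  unfolding D_def by (auto intro: act_fs act_red)

lemma op_mul: "D d \<Longrightarrow> op (mk s (a::'a)) (op (mk s b) d) = op (mk s (mul s a b)) d"
proof -
  assume d: "D d"
  have "op (mk s a) (op (mk s b) d) = lin (\<lambda>w. op (mk s a) (act (mk s b) w)) d"
    unfolding op_def[of "mk s b"]
    by (rule op_lin[OF fs_D[OF d]]) (use d in \<open>auto intro: D_act dest: red_D\<close>)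
  also have "\<dots> = op (mk s (mul s a b)) d"
    unfolding op_def[of "mk s (mul s a b)"]
    by (rule lin_cong) (use d in \<open>auto simp: act_mul[OF nt] dest: red_D\<close>)
  finally show ?thesis .
qed

lemma OP_rel: "(r::'a fa) \<in> dbl_rels \<Longrightarrow> D d \<Longrightarrow> OP r d = (\<lambda>w. (0::complex))"
proof -
  assume r: "r \<in> dbl_rels" and d: "D d"
  have I: "Inl x = mk True x" and R: "Inr x = mk False x" for x :: 'a by simp_all
  have sc: "sc True c = c" "sc False c = cnj c" for c unfolding sc_def by simp_all
  have mm: "mul True a b = a * b" "mul False a b = b * a" for a b :: 'a unfolding mul_def by simp_all
  from r show ?thesis
    unfolding dbl_rels_def
    apply (elim UnE CollectE exE conjE singletonE insertE)
    apply (simp_all add: OP_ops fs_fa_ops fs_word OP_word1 OP_word2)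
    apply (simp_all only: I R op_add op_scale sc op_one[OF d] op_mul[OF d] mm)
    apply (simp_all)
    done
qed

lemma I_OP: "(f::'a fa) \<in> dbl_ideal \<Longrightarrow> D d \<Longrightarrow> OP f d = (\<lambda>w. (0::complex))"
proof (induction f arbitrary: d rule: dbl_ideal.induct)
  case (rel r) then show ?case by (rule OP_rel)
next
  case zero show ?case by (rule OP_zero)
next
  case (add f g) then show ?case by (simp add: OP_ops I_fs)
next
  case (smult f c) then show ?case by (simp add: OP_ops I_fs)
next
  case (mult_left f g)
  then have "OP (fa_mul g f) d = OP g (OP f d)"
    by (intro OP_mul) (auto simp: I_fs carrier_fs)
  then show ?case using mult_left by (simp add: OP_zero2)
next
  case (mult_right f g)
  then have "OP (fa_mul f g) d = OP f (OP g d)"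
    by (intro OP_mul) (auto simp: I_fs carrier_fs)
  then show ?case using mult_right by (simp add: OP_D carrier_fs)
qed

lemma D_word: "red u \<Longrightarrow> D (fa_word (u::('a+'a) list))"
  unfolding D_def using fs_word[of u] by (auto simp: fa_word_app)

lemma OPw_red: "red u \<Longrightarrow> OPw u (fa_word []) = fa_word (u::('a+'a) list)"
proof (induction u)
  case Nil then show ?case by simp
next
  case (Cons g u)
  then have "red u" by (simp add: red_Cons)
  then have "OPw (g # u) (fa_word []) = op g (fa_word u)" using Cons by simp
  also have "\<dots> = act g u" unfolding op_def fa_word_def by (rule ext, subst lin_delta) simp
  also have "\<dots> = fa_word (g # u)" by (rule act_single[OF nt Cons.prems])
  finally show ?case .
qed

lemma N_id: "D e \<Longrightarrow> N e = (e::'a fa)"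
proof -
  assume e: "D e"
  have "N e = lin (\<lambda>w w'. if w' = w then 1 else 0) e"
    unfolding N_def OP_def
  proof (rule lin_cong)
    fix w assume "e w \<noteq> 0"
    then have "red w" using red_D[OF e] by blast
    then show "OPw w (fa_word []) = (\<lambda>w'. if w' = w then 1 else 0)"
      using OPw_red[of w] unfolding fa_word_def by simp
  qed
  also have "\<dots> = e" by (rule lin_id[OF fs_D[OF e]])
  finally show ?thesis .
qed

lemma N_D: "fs f \<Longrightarrow> D (N (f::'a fa))"
  unfolding N_def by (rule OP_D) (auto intro: D_word)

lemma N_I: "(f::'a fa) \<in> dbl_ideal \<Longrightarrow> N f = (\<lambda>w. 0)"
  unfolding N_def by (rule I_OP) (auto intro: D_word)

lemma N_mul: "fs f \<Longrightarrow> fs g \<Longrightarrow> N (fa_mul f g) = OP f (N (g::'a fa))"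
  unfolding N_def by (rule OP_mul) (auto intro: D_word)

lemma N_diff: "fs f \<Longrightarrow> fs g \<Longrightarrow> N (\<lambda>w. f w - g w) = (\<lambda>w. N f w - N (g::'a fa) w)"
  unfolding N_def by (rule OP_diff)

lemma N_sum: "finite I \<Longrightarrow> (\<And>i. i \<in> I \<Longrightarrow> fs (f i)) \<Longrightarrow>
   N (\<lambda>w. \<Sum>i\<in>I. (f i::'a fa) w) = (\<lambda>w. \<Sum>i\<in>I. N (f i) w)"
  unfolding N_def OP_def by (rule ext, rule lin_sum)

lemma deq_lin: "fs e \<Longrightarrow> (\<And>v. e v \<noteq> 0 \<Longrightarrow> dbl_eq (F v) ((G v)::'a fa)) \<Longrightarrow> dbl_eq (lin F e) (lin G e)"
  unfolding lin_def fs_def by (intro deq_sum deq_smult) auto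

lemma rel_eq1: "dbl_eq (fa_word [mk s ((a::'a) + b)]) (\<lambda>w. fa_word [mk s a] w + fa_word [mk s b] w)"
  unfolding dbl_eq_def using I_rel[OF rels_mem(1)] I_rel[OF rels_mem(5)]
  by (cases s) (simp_all add: fa_add_app)
lemma rel_eq2: "dbl_eq (fa_word [mk s (cscale c (a::'a))]) (\<lambda>w. sc s c * fa_word [mk s a] w)"
  unfolding dbl_eq_def using I_rel[OF rels_mem(2)] I_rel[OF rels_mem(6)]
  by (cases s) (simp_all add: fa_smult_app sc_def)
lemma rel_eq3: "dbl_eq (fa_word [mk s (a::'a), mk s b]) (fa_word [mk s (mul s a b)])"
  unfolding dbl_eq_def using I_rel[OF rels_mem(3)] I_rel[OF rels_mem(7)]
  by (cases s) (simp_all add: mul_def)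
lemma rel_eq4: "dbl_eq (fa_word [mk s (1::'a)]) (fa_word [])"
  unfolding dbl_eq_def using I_rel[OF rels_mem(4)] I_rel[OF rels_mem(8)]
  by (cases s) (simp_all add: fa_one_def)
lemmas rel_eqs = rel_eq1 rel_eq2 rel_eq3 rel_eq4

lemma deq_word0: "dbl_eq (fa_word [mk s (0::'a)]) (\<lambda>w. 0)"
proof -
  have "(\<lambda>w. fa_word [mk s (0::'a)] w - (fa_word [mk s 0] w + fa_word [mk s 0] w)) \<in> dbl_ideal"
    using rel_eqs(1)[of s 0 0] unfolding deq_def2 by simp
  then have "(\<lambda>w. - fa_word [mk s (0::'a)] w - 0) \<in> dbl_ideal" by (simp add: algebra_simps)
  then have "(\<lambda>w. - (- fa_word [mk s (0::'a)] w - 0)) \<in> dbl_ideal" by (rule I_neg)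
  then show ?thesis unfolding deq_def2 by simp
qed

lemma deq_word_sum: "finite F \<Longrightarrow> dbl_eq (fa_word [mk s (\<Sum>c\<in>F. (y c::'a))]) (\<lambda>w. \<Sum>c\<in>F. fa_word [mk s (y c)] w)"
proof (induction F rule: finite_induct)
  case empty then show ?case by (simp add: deq_word0)
next
  case (insert c F)
  have "dbl_eq (fa_word [mk s (\<Sum>c\<in>insert c F. y c)]) (fa_word [mk s (y c + (\<Sum>c\<in>F. y c))])"
    using insert by (simp add: deq_refl)
  also have "dbl_eq \<dots> (\<lambda>w. fa_word [mk s (y c)] w + fa_word [mk s (\<Sum>c\<in>F. y c)] w)"
    by (rule rel_eqs(1))
  also have "dbl_eq \<dots> (\<lambda>w. fa_word [mk s (y c)] w + (\<Sum>c\<in>F. fa_word [mk s (y c)] w))"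
    by (rule deq_add[OF deq_refl insert.IH])
  finally show ?case using insert by simp
qed

lemma deq_expand0: "dbl_eq (fa_word [mk s (x::'a)]) (expand s x [])"
proof -
  define S where "S \<equiv> {c. coord x c \<noteq> 0} - {1}"
  have fS: "finite S" unfolding S_def using coord_fin by auto
  have x: "x = (\<Sum>c\<in>insert 1 S. cscale (coord x c) c)"
    by (rule coord_expand[OF nt, symmetric]) (auto simp: fS S_def coord_fin)
  have "dbl_eq (fa_word [mk s x]) (\<lambda>w. \<Sum>c\<in>insert 1 S. fa_word [mk s (cscale (coord x c) c)] w)"
    by (subst x, rule deq_word_sum) (simp add: fS)
  also have "dbl_eq \<dots> (\<lambda>w. \<Sum>c\<in>insert 1 S. sc s (coord x c) * fa_word [mk s c] w)"
    by (rule deq_sum) (auto simp: fS intro: rel_eqs(2))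
  also have "(\<lambda>w. \<Sum>c\<in>insert 1 S. sc s (coord x c) * fa_word [mk s c] w) =
     (\<lambda>w. sc s (coord x 1) * fa_word [mk s 1] w + (\<Sum>c\<in>S. sc s (coord x c) * fa_word [mk s c] w))"
  proof -
    have "1 \<notin> S" by (simp add: S_def)
    then show ?thesis using fS by simp
  qed
  also have "dbl_eq \<dots> (\<lambda>w. sc s (coord x 1) * fa_word [] w + (\<Sum>c\<in>S. sc s (coord x c) * fa_word [mk s c] w))"
    by (rule deq_add[OF deq_smult[OF rel_eqs(4)] deq_refl])
  also have "\<dots> = expand s x []"
    unfolding expand_as_sum[OF nt, of s x] S_def ..
  finally show ?thesis .
qed

lemma fa_mul_sum_left: "fa_mul (\<lambda>w. \<Sum>i\<in>I. f i w) h = (\<lambda>w. \<Sum>i\<in>I. fa_mul (f i) h w)"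
  unfolding fa_mul_def by (simp add: sum_distrib_right) (rule ext, rule sum.swap)

lemma deq_expand: "dbl_eq (fa_word (mk s (x::'a) # t)) (expand s x t)"
proof -
  define S where "S \<equiv> {c. coord x c \<noteq> 0} - {1}"
  have "fa_word (mk s x # t) = fa_mul (fa_word [mk s x]) (fa_word t)" by (simp add: fa_mul_word)
  also have "dbl_eq \<dots> (fa_mul (expand s x []) (fa_word t))"
    by (rule deq_mul_right[OF fs_word deq_expand0])
  also have "fa_mul (expand s x []) (fa_word t) = expand s x t"
    unfolding expand_as_sum[OF nt, of s x] S_def[symmetric]
    by (simp add: fa_mul_add_left fa_mul_smult_left fa_mul_sum_left fa_mul_word)
  finally show ?thesis .
qed

lemma deq_act: "red v \<Longrightarrow> dbl_eq (fa_word ((g::'a+'a) # v)) (act g v)"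
proof (cases v)
  case Nil
  show ?thesis unfolding Nil act_def using deq_expand[of "isl g" "base g" "[]"]
    by (simp add: mk_isl_base)
next
  case (Cons h t)
  assume r: "red v"
  show ?thesis
  proof (cases "isl h = isl g")
    case True
    have "fa_word (g # v) = fa_mul (fa_word [mk (isl g) (base g), mk (isl g) (base h)]) (fa_word t)"
    proof -
      have "mk (isl g) (base h) = h" using True mk_isl_base[of h] by simp
      then show ?thesis by (simp add: fa_mul_word Cons mk_isl_base)
    qed
    also have "dbl_eq \<dots> (fa_mul (fa_word [mk (isl g) (mul (isl g) (base g) (base h))]) (fa_word t))"
      by (rule deq_mul_right[OF fs_word rel_eqs(3)])
    also have "\<dots> = fa_word (mk (isl g) (mul (isl g) (base g) (base h)) # t)" by (simp add: fa_mul_word)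
    also have "dbl_eq \<dots> (act g v)"
      unfolding act_def Cons using True by (simp add: deq_expand)
    finally show ?thesis .
  next
    case False
    show ?thesis unfolding act_def Cons using False deq_expand[of "isl g" "base g" "h # t"]
      by (simp add: mk_isl_base)
  qed
qed

lemma deq_op: "D e \<Longrightarrow> dbl_eq (fa_mul (fa_word [g]) e) (op (g::'a+'a) e)"
proof -
  assume e: "D e"
  have "fa_mul (fa_word [g]) e = lin (\<lambda>v. fa_word ([g] @ v)) e"
    by (simp add: fa_mul_word_left shift_lin[OF fs_D[OF e]])
  also have "dbl_eq \<dots> (lin (act g) e)"
    by (rule deq_lin[OF fs_D[OF e]]) (use e in \<open>auto intro: deq_act dest: red_D\<close>)
  finally show ?thesis unfolding op_def .
qed

lemma deq_OPw: "dbl_eq (fa_word u) (OPw u (fa_word ([]::('a+'a) list)))"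
proof (induction u)
  case Nil then show ?case by (simp add: deq_refl)
next
  case (Cons g u)
  have "fa_word (g # u) = fa_mul (fa_word [g]) (fa_word u)" by (simp add: fa_mul_word)
  also have "dbl_eq \<dots> (fa_mul (fa_word [g]) (OPw u (fa_word [])))"
    by (rule deq_mul_left[OF fs_word Cons.IH])
  also have "dbl_eq \<dots> (op g (OPw u (fa_word [])))"
    by (rule deq_op, rule OPw_D, rule D_word) simp
  finally show ?case by simp
qed

lemma deq_N: "fs f \<Longrightarrow> dbl_eq f (N (f::'a fa))"
proof -
  assume f: "fs f"
  have "f = lin (\<lambda>w w'. if w' = w then 1 else 0) f" by (rule lin_id[symmetric, OF f])
  also have "\<dots> = lin fa_word f" unfolding fa_word_def ..
  also have "dbl_eq \<dots> (N f)" unfolding N_def OP_def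
    by (rule deq_lin[OF f]) (rule deq_OPw)
  finally show ?thesis .
qed

lemma deq_iff: "fs f \<Longrightarrow> fs g \<Longrightarrow> dbl_eq f g \<longleftrightarrow> N f = N (g::'a fa)"
proof
  assume f: "fs f" and g: "fs g" and "dbl_eq f g"
  then have "(\<lambda>w. f w - g w) \<in> dbl_ideal" unfolding deq_def2 by simp
  then have "N (\<lambda>w. f w - g w) = (\<lambda>w. 0)" by (rule N_I)
  then show "N f = N g" unfolding N_diff[OF f g] by (metis eq_iff_diff_eq_0 ext)
next
  assume f: "fs f" and g: "fs g" and "N f = N g"
  then show "dbl_eq f g" using deq_N[OF f] deq_N[OF g] by (metis deq_sym deq_trans)
qed

end


lemma isl_swap[simp]: "isl (swap_gen g) = (\<not> isl g)" by (cases g) auto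
lemma base_swap[simp]: "base (swap_gen g) = base g" by (cases g) auto

lemma red_sw: "red w \<Longrightarrow> red (sw w)"
  unfolding red_def sw_def by (auto simp: successively_map elim: successively_mono)

lemma red_append: "red u \<Longrightarrow> red v \<Longrightarrow> (u = [] \<or> v = [] \<or> isl (last u) \<noteq> isl (hd v)) \<Longrightarrow> red (u @ v)"
  unfolding red_def by (auto simp: successively_append_iff)

lemma last_sw: "u \<noteq> [] \<Longrightarrow> last (sw u) = swap_gen (hd u)"
  unfolding sw_def by (cases u) auto
lemma hd_sw: "u \<noteq> [] \<Longrightarrow> hd (sw u) = swap_gen (last u)"
  unfolding sw_def by (simp add: hd_rev last_map)

lemma red_u_swu: "red u \<Longrightarrow> red (u @ sw u)"
  by (rule red_append) (auto simp: red_sw hd_sw)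
lemma red_swu_u: "red u \<Longrightarrow> red (sw u @ u)"
  by (rule red_append) (auto simp: red_sw last_sw)

lemma D_star: "D d \<Longrightarrow> D (fa_star d)"
  unfolding D_def by (auto simp: fa_star_fs fa_star_app) (metis red_sw sw_sw)

definition bnd :: "'a fa \<Rightarrow> nat \<Rightarrow> bool" where
  "bnd d m \<longleftrightarrow> (\<forall>w. d w \<noteq> 0 \<longrightarrow> length w \<le> m)"

lemma bnd_star: "bnd d m \<Longrightarrow> bnd (fa_star d) m"
  unfolding bnd_def fa_star_app by (metis complex_cnj_zero sw_len)

lemma op_bnd: "bnd e k \<Longrightarrow> bnd (op g e) (Suc k)"
  unfolding bnd_def op_def using act_len by (fastforce dest!: lin_supp)

lemma OPw_bnd: "bnd e n \<Longrightarrow> bnd (OPw u e) (length u + n)"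
  by (induction u) (auto intro: op_bnd)

lemma OP_bnd: "bnd d m \<Longrightarrow> bnd e n \<Longrightarrow> bnd (OP d e) (m + n)"
proof -
  assume d: "bnd d m" and e: "bnd e n"
  show ?thesis unfolding bnd_def
  proof (intro allI impI)
    fix w assume "OP d e w \<noteq> 0"
    then obtain u where "d u \<noteq> 0" "OPw u e w \<noteq> 0" unfolding OP_def by (blast dest: lin_supp)
    then show "length w \<le> m + n" using d OPw_bnd[OF e, of u] unfolding bnd_def by fastforce
  qed
qed

context
  assumes nt: "(1::'a::cplx_unital_alg) \<noteq> 0"
begin

lemma op_top:
  assumes g: "base (g::'a+'a) \<in> Bp" and e: "D e" "bnd e k" and w: "red w" "length w = Suc k"
  shows "op g e w = (if hd w = g then e (tl w) else 0)"
proof -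
  let ?S = "{v. e v \<noteq> 0}"
  have fS: "finite ?S" using fs_D[OF e(1)] unfolding fs_def .
  have tm: "act g v w = (if v = tl w \<and> hd w = g then 1 else 0)" if v: "v \<in> ?S" for v
  proof -
    have rv: "red v" and lv: "length v \<le> k" using v e unfolding D_def bnd_def by auto
    show ?thesis
    proof (cases "\<exists>h t. v = h # t \<and> isl h = isl g")
      case True
      then obtain h t where ht: "v = h # t" "isl h = isl g" by blast
      have "act g v w = expand (isl g) (mul (isl g) (base g) (base h)) t w"
        unfolding act_def ht using ht by simp
      also have "\<dots> = 0" using expand_len[of "isl g" _ t w] w lv ht by fastforce
      finally have a0: "act g v w = 0" .
      have "\<not> (v = tl w \<and> hd w = g)"
      proof
        assume "v = tl w \<and> hd w = g"
        then have "w = g # h # t" using w(2) ht by (cases w) auto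
        then show False using w(1) ht by (simp add: red_Cons nst_def)
      qed
      then show ?thesis using a0 by simp
    next
      case False
      have "act g v = expand (isl g) (base g) v"
        unfolding act_def using False by (cases v) auto
      also have "\<dots> = fa_word (g # v)" using expand_basis[OF nt g] mk_isl_base by metis
      finally show ?thesis unfolding fa_word_app using w(2) by (cases w) auto
    qed
  qed
  have "op g e w = (\<Sum>v\<in>?S. e v * act g v w)" unfolding op_def lin_def ..
  also have "\<dots> = (\<Sum>v\<in>?S. if v = tl w then (if hd w = g then e v else 0) else 0)"
    by (rule sum.cong) (auto simp: tm)
  also have "\<dots> = (if hd w = g then e (tl w) else 0)"
    by (subst sum.delta[OF fS]) auto
  finally show ?thesis .
qed

lemma OPw_top:
  assumes u: "red u" and e: "D (e::'a fa)" "bnd e n"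
  shows "red w \<Longrightarrow> length w = length u + n \<Longrightarrow>
    OPw u e w = (if take (length u) w = u then e (drop (length u) w) else (0::complex))"
  using u
proof (induction u arbitrary: w)
  case Nil then show ?case by simp
next
  case (Cons g u)
  obtain h t where w: "w = h # t" using Cons.prems by (cases w) auto
  have g: "base g \<in> Bp" and ru: "red u" using Cons.prems by (auto simp: red_Cons)
  have rt: "red t" using Cons.prems w by (simp add: red_Cons)
  have "OPw (g # u) e w = op g (OPw u e) w" by simp
  also have "\<dots> = (if hd w = g then OPw u e (tl w) else 0)"
    by (rule op_top[OF g OPw_D[OF e(1)] OPw_bnd[OF e(2)]]) (use Cons.prems in auto)
  also have "\<dots> = (if h = g then (if take (length u) t = u then e (drop (length u) t) else 0) else 0)"
    using Cons.IH[OF rt _ ru] Cons.prems w by simp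
  finally show ?case using w by auto
qed

lemma OP_top:
  assumes d: "D (d::'a fa)" "bnd d m" and e: "D e" "bnd e n" and w: "red w" "length w = m + n"
  shows "OP d e w = d (take m w) * e (drop m w)"
proof -
  let ?S = "{u. d u \<noteq> 0}"
  have fS: "finite ?S" using fs_D[OF d(1)] unfolding fs_def .
  have tm: "d u * OPw u e w = (if u = take m w then d u * e (drop m w) else 0)" if u: "u \<in> ?S" for u
  proof -
    have ru: "red u" and lu: "length u \<le> m" using u d unfolding D_def bnd_def by auto
    show ?thesis
    proof (cases "length u = m")
      case True
      then show ?thesis using OPw_top[OF ru e w(1)] w(2) by auto
    next
      case False
      then have "length u < m" using lu by simp
      then have "OPw u e w = 0" using OPw_bnd[OF e(2), of u] w(2) unfolding bnd_def by fastforce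
      moreover have "u \<noteq> take m w" using \<open>length u < m\<close> w(2) by auto
      ultimately show ?thesis by simp
    qed
  qed
  have "OP d e w = (\<Sum>u\<in>?S. d u * OPw u e w)" unfolding OP_def lin_def ..
  also have "\<dots> = (\<Sum>u\<in>?S. if u = take m w then d u * e (drop m w) else 0)"
    by (rule sum.cong) (auto simp: tm)
  also have "\<dots> = d (take m w) * e (drop m w)"
    by (subst sum.delta[OF fS]) auto
  finally show ?thesis .
qed

lemma op_nored: "D f \<Longrightarrow> (\<And>v. f v \<noteq> 0 \<Longrightarrow> red (g # v)) \<Longrightarrow> op (g::'a+'a) f = shift [g] f"
proof -
  assume f: "D f" and r: "\<And>v. f v \<noteq> 0 \<Longrightarrow> red (g # v)"
  have "op g f = lin (\<lambda>v. fa_word ([g] @ v)) f"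
    unfolding op_def by (rule lin_cong) (simp add: act_single[OF nt] r)
  also have "\<dots> = shift [g] f" by (rule shift_lin[symmetric, OF fs_D[OF f]])
  finally show ?thesis .
qed

lemma OPw_nored: "red u \<Longrightarrow> D e \<Longrightarrow> (\<And>v. e v \<noteq> 0 \<Longrightarrow> red (u @ v)) \<Longrightarrow> OPw u e = shift u (e::'a fa)"
proof (induction u)
  case Nil then show ?case by (auto simp: shift_def)
next
  case (Cons g u)
  have ru: "red u" using Cons.prems by (simp add: red_Cons)
  have "\<And>v. e v \<noteq> 0 \<Longrightarrow> red (u @ v)"
    using Cons.prems by (auto simp: red_Cons)
  then have IH: "OPw u e = shift u e" using Cons.IH ru Cons.prems by blast
  have "OPw (g # u) e = op g (shift u e)" using IH by simp
  also have "\<dots> = shift [g] (shift u e)"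
  proof (rule op_nored)
    show "D (shift u e)" using IH OPw_D[OF Cons.prems(2)] by metis
    fix v assume "shift u e v \<noteq> 0"
    then have "take (length u) v = u" "e (drop (length u) v) \<noteq> 0" unfolding shift_def by (auto split: if_splits)
    then show "red (g # v)" using Cons.prems(3) by (metis append_Cons append_take_drop_id)
  qed
  also have "\<dots> = shift (g # u) e" by (rule shift_Cons[symmetric])
  finally show ?case .
qed

lemma OP_nored: "D d \<Longrightarrow> D e \<Longrightarrow> (\<And>u v. d u \<noteq> 0 \<Longrightarrow> e v \<noteq> 0 \<Longrightarrow> red (u @ v)) \<Longrightarrow>
  OP d e = fa_mul d (e::'a fa)"
proof -
  assume d: "D d" and e: "D e" and r: "\<And>u v. d u \<noteq> 0 \<Longrightarrow> e v \<noteq> 0 \<Longrightarrow> red (u @ v)"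
  have "OP d e = lin (\<lambda>u. shift u e) d"
    unfolding OP_def
  proof (rule lin_cong)
    fix u assume "d u \<noteq> 0"
    then show "OPw u e = shift u e" using r d e by (intro OPw_nored) (auto dest: red_D)
  qed
  also have "\<dots> = fa_mul d e" by (simp add: fa_mul_lin_left[OF fs_D[OF d]] fa_mul_word_left)
  finally show ?thesis .
qed

lemma N_star: "fs x \<Longrightarrow> N (fa_star x) = fa_star (N (x::'a fa))"
proof -
  assume x: "fs x"
  have "dbl_eq (fa_star x) (fa_star (N x))" by (rule deq_star[OF deq_N[OF nt x]])
  then have "N (fa_star x) = N (fa_star (N x))"
    using deq_iff[OF nt] x by (metis D_star N_D[OF nt x] fa_star_fs fs_D)
  also have "\<dots> = fa_star (N x)" by (rule N_id[OF nt D_star[OF N_D[OF nt x]]])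
  finally show ?thesis .
qed

lemma OP_N: "fs x \<Longrightarrow> D e \<Longrightarrow> OP x e = OP (N (x::'a fa)) e"
proof -
  assume x: "fs x" and e: "D e"
  have "(\<lambda>w. x w - N x w) \<in> dbl_ideal" using deq_N[OF nt x] unfolding deq_def2 .
  then have "OP (\<lambda>w. x w - N x w) e = (\<lambda>w. 0)" by (rule I_OP[OF nt _ e])
  then show ?thesis unfolding OP_diff[OF x fs_D[OF N_D[OF nt x]]] by (metis eq_iff_diff_eq_0 ext)
qed

lemma N_mul2: "fs x \<Longrightarrow> fs y \<Longrightarrow> N (fa_mul x y) = OP (N x) (N (y::'a fa))"
  by (simp add: N_mul[OF nt] OP_N N_D[OF nt])

end



lemma cm: "cnj a * a = cnj b * (b::complex) \<Longrightarrow> cmod a = cmod b"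
proof -
  assume h: "cnj a * a = cnj b * b"
  have "cmod (cnj a * a) = cmod (cnj b * b)" using h by simp
  then have "(cmod a)^2 = (cmod b)^2" by (simp add: norm_mult power2_eq_square)
  then show ?thesis by (simp add: power2_eq_iff_nonneg)
qed

lemma lc: "cmod l = 1 \<Longrightarrow> l * cnj l = 1"
  by (metis complex_norm_square mult.commute of_real_1 power_one)

lemma p1: "cnj al * A0 = cnj be * E0 \<Longrightarrow> A0 \<noteq> 0 \<Longrightarrow> E0 \<noteq> 0 \<Longrightarrow> l = A0 / E0 \<Longrightarrow> cmod l = 1 \<Longrightarrow> al = l * (be::complex)"
proof -
  assume h: "cnj al * A0 = cnj be * E0" and a: "A0 \<noteq> 0" and e: "E0 \<noteq> 0" and l: "l = A0 / E0" and l1: "cmod l = 1"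
  have "cnj al * l = cnj al * A0 / E0" using l by simp
  also have "\<dots> = cnj be * E0 / E0" using h by simp
  also have "\<dots> = cnj be" using e by simp
  finally have "cnj al * l = cnj be" .
  then have "al * cnj l = be" by (metis complex_cnj_cnj complex_cnj_mult)
  then have "al * (l * cnj l) = be * l" by (simp add: ac_simps)
  then show ?thesis using lc[OF l1] by (simp add: ac_simps)
qed

lemma p2: "cnj A0 * Ac = cnj E0 * Ec \<Longrightarrow> cnj A0 * A0 = cnj E0 * E0 \<Longrightarrow> A0 \<noteq> 0 \<Longrightarrow> E0 \<noteq> 0 \<Longrightarrow> l = A0 / E0 \<Longrightarrow> Ac = l * (Ec::complex)"
proof -
  assume h: "cnj A0 * Ac = cnj E0 * Ec" and n: "cnj A0 * A0 = cnj E0 * E0" and a: "A0 \<noteq> 0" and e: "E0 \<noteq> 0" and l: "l = A0 / E0"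
  have ca: "cnj A0 \<noteq> 0" using a by simp
  have "Ac = cnj E0 * Ec / cnj A0" using h ca by (simp add: field_simps)
  also have "cnj E0 / cnj A0 = A0 / E0" using n ca e by (simp add: field_simps)
  then have "cnj E0 * Ec / cnj A0 = A0 / E0 * Ec" by (metis mult.commute times_divide_eq_left)
  finally show ?thesis using l by simp
qed

lemma zcnj0: "cnj z * z = 0 \<Longrightarrow> z = (0::complex)"
  by simp

lemma sumsq: "(\<Sum>i<(n::nat). z i * cnj (z i)) = 0 \<Longrightarrow> i < n \<Longrightarrow> z i = (0::complex)"
proof -
  assume s: "(\<Sum>i<n. z i * cnj (z i)) = 0" and i: "i < n"
  have "z i * cnj (z i) = complex_of_real ((cmod (z i))^2)" for i
    by (rule complex_norm_square[symmetric])
  then have "complex_of_real (\<Sum>i<n. (cmod (z i))^2) = 0" using s by simp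
  then have "(\<Sum>i<n. (cmod (z i))^2) = 0" by (simp only: of_real_eq_0_iff)
  then have "\<forall>i\<in>{..<n}. (cmod (z i))^2 = 0"
    using sum_nonneg_eq_0_iff[of "{..<n}" "\<lambda>i. (cmod (z i))^2"] by simp
  then show "z i = 0" using i by simp
qed

lemma cx:
  fixes al be :: complex
  assumes h1: "cnj al * al = cnj be * be"
    and h2: "\<forall>c\<in>B. cnj al * A c = cnj be * E c"
    and h3: "\<forall>c\<in>B. \<forall>c'\<in>B. cnj (A c) * A c' = cnj (E c) * E c'"
  shows "\<exists>l. cmod l = 1 \<and> al = l * be \<and> (\<forall>c\<in>B. A c = l * E c)"
proof (cases "\<exists>c0\<in>B. A c0 \<noteq> 0")
  case True
  then obtain c0 where c0: "c0 \<in> B" "A c0 \<noteq> 0" by blast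
  have n: "cnj (A c0) * A c0 = cnj (E c0) * E c0" using h3 c0 by auto
  have nn: "cmod (A c0) = cmod (E c0)" by (rule cm[OF n])
  have E0: "E c0 \<noteq> 0" using nn c0 by auto
  define l where "l = A c0 / E c0"
  have l1: "cmod l = 1" unfolding l_def using nn E0 by (simp add: norm_divide)
  have "al = l * be" by (rule p1[OF _ c0(2) E0 l_def l1]) (use h2 c0 in auto)
  moreover have "\<forall>c\<in>B. A c = l * E c"
  proof
    fix c assume c: "c \<in> B"
    show "A c = l * E c" by (rule p2[OF _ n c0(2) E0 l_def]) (use h3 c0 c in auto)
  qed
  ultimately show ?thesis using l1 by blast
next
  case False
  then have A0: "\<forall>c\<in>B. A c = 0" by blast
  have E0: "\<forall>c\<in>B. E c = 0"
  proof
    fix c assume c: "c \<in> B"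
    then have "cnj (E c) * E c = 0" using h3 A0 by force
    then show "E c = 0" by (rule zcnj0)
  qed
  show ?thesis
  proof (cases "be = 0")
    case True
    then have "al = 0" using h1 by simp
    then show ?thesis using True A0 E0 by (intro exI[of _ 1]) auto
  next
    case False
    have nn: "cmod al = cmod be" by (rule cm[OF h1])
    show ?thesis using False nn A0 E0
      by (intro exI[of _ "al / be"]) (auto simp: norm_divide)
  qed
qed



lemma maxlen: "finite W \<Longrightarrow> w0 \<in> W \<Longrightarrow> \<exists>u\<in>W. \<forall>w\<in>W. length w \<le> length u"
proof -
  assume f: "finite W" and w0: "w0 \<in> W"
  have ne: "length ` W \<noteq> {}" using w0 by auto
  have "Max (length ` W) \<in> length ` W" by (rule Max_in) (use f ne in auto)
  then obtain u where u: "u \<in> W" "length u = Max (length ` W)" by auto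
  have "\<forall>w\<in>W. length w \<le> length u" using u f by auto
  then show ?thesis using u by blast
qed

lemma fin_W: "finite I \<Longrightarrow> (\<And>i. i \<in> I \<Longrightarrow> fs (d i)) \<Longrightarrow> finite {w. \<exists>i\<in>I. d i w \<noteq> 0}"
proof -
  assume "finite I" "\<And>i. i \<in> I \<Longrightarrow> fs (d i)"
  moreover have "{w. \<exists>i\<in>I. d i w \<noteq> 0} = (\<Union>i\<in>I. {w. d i w \<noteq> 0})" by auto
  ultimately show ?thesis unfolding fs_def by auto
qed

lemma triv: assumes one: "(1::'a::cplx_unital_alg) = 0" and f: "fs (f::'a fa)" shows "dbl_eq f (\<lambda>w. 0)"
proof -
  have "fa_diff (fa_word [Inl (0+0::'a)]) (fa_add (fa_word [Inl 0]) (fa_word [Inl 0])) \<in> dbl_ideal"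
    by (rule I_rel[OF rels_mem(1)])
  then have "(\<lambda>w. - fa_word [Inl (0::'a)] w) \<in> dbl_ideal" by (simp add: fa_diff_app fa_add_app)
  then have z: "fa_word [Inl (0::'a)] \<in> dbl_ideal" using I_neg by fastforce
  have "fa_diff (fa_word [Inl (1::'a)]) fa_one \<in> dbl_ideal" by (rule I_rel[OF rels_mem(4)])
  then have "(\<lambda>w. fa_word [Inl (0::'a)] w - fa_one w) \<in> dbl_ideal" using one by (simp add: fa_diff_app)
  then have "(\<lambda>w. fa_word [Inl (0::'a)] w - (fa_word [Inl (0::'a)] w - fa_one w)) \<in> dbl_ideal"
    using I_diff[OF z] by blast
  then have o: "(fa_one::'a fa) \<in> dbl_ideal" by simp
  have "fa_mul fa_one f = f" unfolding fa_one_def fa_mul_word_left shift_def by simp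
  then have "f \<in> dbl_ideal" using I_mul_right[OF o f] by simp
  then show ?thesis unfolding deq_def2 by simp
qed

lemma N_zero: "N (\<lambda>w. 0) = (\<lambda>w. 0)" unfolding N_def by (rule OP_zero)

context
  assumes nt: "(1::'a::cplx_unital_alg) \<noteq> 0"
begin

lemma pos1:
  assumes D: "\<forall>i<(n::nat). D (d i :: 'a fa)" and S: "\<forall>w. (\<Sum>i<n. OP (d i) (fa_star (d i)) w) = 0"
  shows "\<forall>i<n. d i = (\<lambda>w. 0)"
proof (rule ccontr)
  assume "\<not> ?thesis"
  then obtain i0 w0 where i0: "i0 < n" "d i0 w0 \<noteq> 0" by (auto simp: fun_eq_iff)
  let ?W = "{w. \<exists>i\<in>{..<n}. d i w \<noteq> 0}"
  have fW: "finite ?W" by (rule fin_W) (use D in \<open>auto intro: fs_D\<close>)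
  obtain u where u: "u \<in> ?W" "\<forall>w\<in>?W. length w \<le> length u"
    using maxlen[OF fW, of w0] i0 by auto
  obtain i1 where i1: "i1 < n" "d i1 u \<noteq> 0" using u by auto
  have ru: "red u" using D i1 red_D by blast
  have bd: "bnd (d i) (length u)" if "i < n" for i using u that unfolding bnd_def by auto
  have v: "OP (d i) (fa_star (d i)) (u @ sw u) = d i u * cnj (d i u)" if i: "i < n" for i
  proof -
    have "OP (d i) (fa_star (d i)) (u @ sw u) = d i (take (length u) (u @ sw u)) * fa_star (d i) (drop (length u) (u @ sw u))"
      by (rule OP_top[OF nt]) (use D i bd in \<open>auto intro: D_star bnd_star red_u_swu ru\<close>)
    then show ?thesis by (simp add: fa_star_app)
  qed
  have "(\<Sum>i<n. d i u * cnj (d i u)) = 0" using S v by (metis (no_types, lifting) lessThan_iff sum.cong)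
  then have "d i1 u = 0" using i1(1) by (rule sumsq)
  then show False using i1 by simp
qed

lemma pos2:
  assumes D: "\<forall>i<(n::nat). D (d i :: 'a fa)" and S: "\<forall>w. (\<Sum>i<n. OP (fa_star (d i)) (d i) w) = fa_word [] w"
  shows "\<forall>i<n. \<forall>w. d i w \<noteq> 0 \<longrightarrow> w = []"
proof (rule ccontr)
  assume "\<not> ?thesis"
  then obtain i0 w0 where i0: "i0 < n" "d i0 w0 \<noteq> 0" "w0 \<noteq> []" by auto
  let ?W = "{w. \<exists>i\<in>{..<n}. d i w \<noteq> 0}"
  have fW: "finite ?W" by (rule fin_W) (use D in \<open>auto intro: fs_D\<close>)
  obtain u where u: "u \<in> ?W" "\<forall>w\<in>?W. length w \<le> length u"
    using maxlen[OF fW, of w0] i0 by auto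
  obtain i1 where i1: "i1 < n" "d i1 u \<noteq> 0" using u by auto
  have "length w0 \<le> length u" using u i0 by auto
  then have une: "u \<noteq> []" using i0 by auto
  have ru: "red u" using D i1 red_D by blast
  have bd: "bnd (d i) (length u)" if "i < n" for i using u that unfolding bnd_def by auto
  have v: "OP (fa_star (d i)) (d i) (sw u @ u) = d i u * cnj (d i u)" if i: "i < n" for i
  proof -
    have "OP (fa_star (d i)) (d i) (sw u @ u) = fa_star (d i) (take (length u) (sw u @ u)) * d i (drop (length u) (sw u @ u))"
      by (rule OP_top[OF nt]) (use D i bd in \<open>auto intro: D_star bnd_star red_swu_u ru\<close>)
    then show ?thesis by (simp add: fa_star_app)
  qed
  have "fa_word [] (sw u @ u) = 0" using une by (simp add: fa_word_app)
  then have "(\<Sum>i<n. d i u * cnj (d i u)) = 0" using S v by (metis (no_types, lifting) lessThan_iff sum.cong)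
  then have "d i1 u = 0" using i1(1) by (rule sumsq)
  then show False using i1 by simp
qed

definition lowL :: "'a fa \<Rightarrow> bool" where
  "lowL f \<longleftrightarrow> (\<forall>w. f w \<noteq> 0 \<longrightarrow> w = [] \<or> (\<exists>c\<in>Bp. w = [Inl c]))"

lemma N_emb: "N (dbl_emb (a::'a)) = expand True a []"
proof -
  have "N (dbl_emb a) = op (Inl a) (fa_word [])" unfolding N_def dbl_emb_def by (simp add: OP_word)
  also have "\<dots> = act (Inl a) []" unfolding op_def fa_word_def by (rule ext, subst lin_delta) simp
  also have "\<dots> = expand True a []" unfolding act_def by simp
  finally show ?thesis .
qed

lemma lowL_d: "lowL (expand True (a::'a) [])"
  unfolding lowL_def
proof (intro allI impI)
  fix w assume h: "expand True a [] w \<noteq> 0"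
  show "w = [] \<or> (\<exists>c\<in>Bp. w = [Inl c])"
  proof (cases w)
    case Nil then show ?thesis by simp
  next
    case (Cons g t)
    then have "t = [] \<and> isl g \<and> base g \<noteq> 1 \<and> coord a (base g) \<noteq> 0"
      using h unfolding expand_def sc_def by (auto split: if_splits)
    then show ?thesis using Cons coord_nz[of a "base g"] isl_base(1)[of g]
      unfolding Bp_def by (intro disjI2 bexI[of _ "base g"]) auto
  qed
qed

lemma lowL_bnd: "lowL f \<Longrightarrow> bnd f 1"
  unfolding lowL_def bnd_def by force

lemma lowL_Inr: "lowL f \<Longrightarrow> f [Inr c] = 0" "lowL f \<Longrightarrow> f [Inr c, Inl c'] = 0"
  "lowL f \<Longrightarrow> f [Inl c, Inr c'] = 0"
  unfolding lowL_def by force+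

lemma lowL_nored: assumes f: "lowL f" and g: "lowL g" and u: "fa_star f u \<noteq> 0" and v: "g v \<noteq> 0"
  shows "red (u @ v)"
proof -
  have "f (sw u) \<noteq> 0" using u by (simp add: fa_star_app)
  then have "sw u = [] \<or> (\<exists>c\<in>Bp. sw u = [Inl c])" using f unfolding lowL_def by blast
  then have u': "u = [] \<or> (\<exists>c\<in>Bp. u = [Inr c])"
    by (metis sw_single(1) sw_single(5) sw_sw)
  have v': "v = [] \<or> (\<exists>c\<in>Bp. v = [Inl c])" using g v unfolding lowL_def by blast
  show ?thesis using u' v' by (auto simp: red_Cons nst_def)
qed

lemma eval_mul:
  assumes f: "lowL f"
  shows "fa_mul (fa_star f) f [] = cnj (f []) * f []"
    "fa_mul (fa_star f) f [Inl c] = cnj (f []) * f [Inl c]"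
    "fa_mul (fa_star f) f [Inr c, Inl c'] = cnj (f [Inl c]) * f [Inl c']"
proof -
  have z1: "f [Inr c] = 0" "f [Inr c', Inl c] = 0" "f [Inr c, Inl c'] = 0" using lowL_Inr[OF f] by auto
  have sw2: "sw [Inr c, Inl c'] = [Inr c', Inl c]" unfolding sw_def by simp
  show "fa_mul (fa_star f) f [] = cnj (f []) * f []"
    unfolding fa_mul_def by (simp add: fa_star_app sw_single)
  show "fa_mul (fa_star f) f [Inl c] = cnj (f []) * f [Inl c]"
    unfolding fa_mul_def by (simp add: fa_star_app sw_single z1 atMost_Suc)
  show "fa_mul (fa_star f) f [Inr c, Inl c'] = cnj (f [Inl c]) * f [Inl c']"
    unfolding fa_mul_def by (simp add: fa_star_app sw_single z1 sw2 atMost_Suc numeral_2_eq_2)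
qed

lemma N_smult: "fs y \<Longrightarrow> N (fa_smult l y) = (\<lambda>w. l * N (y::'a fa) w)"
  unfolding N_def fa_smult_app by (rule OP_smult)

lemma part3:
  assumes y: "fs (y::'a fa)"
    and h: "dbl_eq (fa_mul (fa_star (dbl_emb a)) (dbl_emb a)) (fa_mul (fa_star y) y)"
  shows "\<exists>l. cmod l = 1 \<and> dbl_eq (dbl_emb a) (fa_smult l y)"
proof -
  let ?x = "dbl_emb a"
  have x: "fs ?x" unfolding dbl_emb_def by (rule fs_word)
  define d where "d = N ?x"
  define e where "e = N y"
  have Dd: "D d" unfolding d_def by (rule N_D[OF nt x])
  have De: "D e" unfolding e_def by (rule N_D[OF nt y])
  have ld: "lowL d" unfolding d_def N_emb by (rule lowL_d)
  have bd: "bnd d 1" by (rule lowL_bnd[OF ld])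
  have "N (fa_mul (fa_star ?x) ?x) = N (fa_mul (fa_star y) y)"
    using h deq_iff[OF nt] by (metis fa_mul_fs fa_star_fs x y)
  then have eq: "OP (fa_star d) d = OP (fa_star e) e"
    unfolding d_def e_def by (simp add: N_mul2[OF nt] fa_star_fs x y N_star[OF nt])
  have be: "bnd e 1"
  proof (rule ccontr)
    assume "\<not> bnd e 1"
    then obtain w0 where w0: "e w0 \<noteq> 0" "length w0 > 1" unfolding bnd_def by force
    let ?W = "{w. e w \<noteq> 0}"
    have fW: "finite ?W" using fs_D[OF De] unfolding fs_def .
    obtain u where u: "u \<in> ?W" "\<forall>w\<in>?W. length w \<le> length u"
      using maxlen[OF fW, of w0] w0 by auto
    have lu: "length u > 1" using u w0 by force
    have ru: "red u" using De u red_D by blast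
    have bu: "bnd e (length u)" using u unfolding bnd_def by auto
    have "OP (fa_star e) e (sw u @ u) = fa_star e (take (length u) (sw u @ u)) * e (drop (length u) (sw u @ u))"
      by (rule OP_top[OF nt]) (use De bu in \<open>auto intro: D_star bnd_star red_swu_u ru\<close>)
    then have v: "OP (fa_star e) e (sw u @ u) = cnj (e u) * e u" by (simp add: fa_star_app)
    have "bnd (OP (fa_star d) d) (1 + 1)" by (rule OP_bnd[OF bnd_star[OF bd] bd])
    then have "OP (fa_star d) d (sw u @ u) = 0" using lu unfolding bnd_def by fastforce
    then have "cnj (e u) * e u = 0" using eq v by simp
    then show False using u by simp
  qed
  have eR: "e [Inr c] = 0" for c
  proof (cases "c \<in> Bp")
    case False
    then have "\<not> red [Inr c]" by (simp add: red_Cons)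
    then show ?thesis using De red_D by blast
  next
    case True
    have rw: "red [Inl c, Inr c]" using True by (simp add: red_Cons nst_def)
    have t1: "OP (fa_star e) e [Inl c, Inr c] = fa_star e [Inl c] * e [Inr c]"
      using OP_top[OF nt D_star[OF De] bnd_star[OF be] De be rw] by simp
    have t2: "OP (fa_star d) d [Inl c, Inr c] = fa_star d [Inl c] * d [Inr c]"
      using OP_top[OF nt D_star[OF Dd] bnd_star[OF bd] Dd bd rw] by simp
    have "cnj (e [Inr c]) * e [Inr c] = 0"
      using t1 t2 eq lowL_Inr(1)[OF ld] by (simp add: fa_star_app sw_single)
    then show ?thesis by simp
  qed
  have le: "lowL e" unfolding lowL_def
  proof (intro allI impI)
    fix w assume w: "e w \<noteq> 0"
    then have lw: "length w \<le> 1" using be unfolding bnd_def by auto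
    have rw: "red w" using De w red_D by blast
    show "w = [] \<or> (\<exists>c\<in>Bp. w = [Inl c])"
    proof (cases w)
      case Nil then show ?thesis by simp
    next
      case (Cons g t)
      then have t: "t = []" using lw by simp
      have gB: "base g \<in> Bp" using rw Cons by (simp add: red_Cons)
      show ?thesis
      proof (cases g)
        case (Inl c) then show ?thesis using Cons t gB by auto
      next
        case (Inr c) then show ?thesis using w Cons t eR by auto
      qed
    qed
  qed
  have eqF: "fa_mul (fa_star d) d = fa_mul (fa_star e) e"
  proof -
    have "OP (fa_star d) d = fa_mul (fa_star d) d"
      by (rule OP_nored[OF nt D_star[OF Dd] Dd]) (rule lowL_nored[OF ld ld])
    moreover have "OP (fa_star e) e = fa_mul (fa_star e) e"
      by (rule OP_nored[OF nt D_star[OF De] De]) (rule lowL_nored[OF le le])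
    ultimately show ?thesis using eq by simp
  qed
  have h1: "cnj (d []) * d [] = cnj (e []) * e []"
    using fun_cong[OF eqF, of "[]"] by (simp add: eval_mul[OF ld] eval_mul[OF le])
  have h2: "\<forall>c\<in>Bp. cnj (d []) * d [Inl c] = cnj (e []) * e [Inl c]"
  proof
    fix c show "cnj (d []) * d [Inl c] = cnj (e []) * e [Inl c]"
      using fun_cong[OF eqF, of "[Inl c]"] by (simp add: eval_mul[OF ld] eval_mul[OF le])
  qed
  have h3: "\<forall>c\<in>Bp. \<forall>c'\<in>Bp. cnj (d [Inl c]) * d [Inl c'] = cnj (e [Inl c]) * e [Inl c']"
  proof (intro ballI)
    fix c c' show "cnj (d [Inl c]) * d [Inl c'] = cnj (e [Inl c]) * e [Inl c']"
      using fun_cong[OF eqF, of "[Inr c, Inl c']"] by (simp add: eval_mul[OF ld] eval_mul[OF le])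
  qed
  obtain l where l: "cmod l = 1" "d [] = l * e []" "\<forall>c\<in>Bp. d [Inl c] = l * e [Inl c]"
    using cx[OF h1 h2 h3] by blast
  have "d = (\<lambda>w. l * e w)"
  proof
    fix w
    show "d w = l * e w"
    proof (cases "w = [] \<or> (\<exists>c\<in>Bp. w = [Inl c])")
      case True then show ?thesis using l by auto
    next
      case False
      then have "d w = 0" "e w = 0" using ld le unfolding lowL_def by blast+
      then show ?thesis by simp
    qed
  qed
  then have "N ?x = N (fa_smult l y)" unfolding d_def e_def N_smult[OF y] by simp
  then have "dbl_eq ?x (fa_smult l y)"
    using deq_iff[OF nt x] y by (simp add: fs_fa_ops(3))
  then show ?thesis using l(1) by blast
qed

end

lemma main1:
  fixes x :: "nat \<Rightarrow> 'a::cplx_unital_alg fa"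
  assumes xs: "\<forall>i<n. x i \<in> fa_carrier"
    and H: "dbl_eq (\<lambda>w. \<Sum>i<n. fa_mul (x i) (fa_star (x i)) w) (\<lambda>_. 0)"
  shows "\<forall>i<n. dbl_eq (x i) (\<lambda>_. 0)"
proof (cases "(1::'a) = 0")
  case True then show ?thesis using triv[OF True] xs by (simp add: carrier_fs)
next
  case False
  note nt = False
  have fx: "fs (x i)" if "i < n" for i using xs that carrier_fs by blast
  have fF: "fs (\<lambda>w. \<Sum>i<n. fa_mul (x i) (fa_star (x i)) w)"
    by (rule fs_sum) (auto intro: fa_mul_fs fa_star_fs fx)
  have "N (\<lambda>w. \<Sum>i<n. fa_mul (x i) (fa_star (x i)) w) = N (\<lambda>_. 0)"
    using deq_iff[OF nt fF fs_zero] H by simp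
  then have z: "(\<lambda>w. \<Sum>i<n. N (fa_mul (x i) (fa_star (x i))) w) = (\<lambda>_. 0)"
    by (subst (asm) N_sum[OF nt]) (auto intro: fa_mul_fs fa_star_fs fx simp: N_zero)
  have e: "N (fa_mul (x i) (fa_star (x i))) = OP (N (x i)) (fa_star (N (x i)))" if "i < n" for i
    using that by (simp add: N_mul2[OF nt] fx fa_star_fs N_star[OF nt])
  have "\<forall>w. (\<Sum>i<n. OP (N (x i)) (fa_star (N (x i))) w) = 0"
  proof
    fix w
    have "(\<Sum>i<n. OP (N (x i)) (fa_star (N (x i))) w) = (\<Sum>i<n. N (fa_mul (x i) (fa_star (x i))) w)"
      by (rule sum.cong[OF refl]) (simp add: e)
    also have "\<dots> = 0" using fun_cong[OF z, of w] by simp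
    finally show "(\<Sum>i<n. OP (N (x i)) (fa_star (N (x i))) w) = 0" .
  qed
  then have "\<forall>i<n. N (x i) = (\<lambda>w. 0)"
    by (intro pos1[OF nt]) (auto intro: N_D[OF nt] fx)
  then show ?thesis
  proof (intro allI impI)
    fix i assume a: "\<forall>i<n. N (x i) = (\<lambda>w. 0)" and i: "i < n"
    have "N (x i) = N (\<lambda>w. 0)" using a i by (simp add: N_zero)
    then show "dbl_eq (x i) (\<lambda>_. 0)" using deq_iff[OF nt fx[OF i] fs_zero] by simp
  qed
qed

lemma main2:
  fixes x :: "nat \<Rightarrow> 'a::cplx_unital_alg fa"
  assumes xs: "\<forall>j<n. x j \<in> fa_carrier"
    and H: "dbl_eq (\<lambda>w. \<Sum>j<n. fa_mul (fa_star (x j)) (x j) w) fa_one"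
  shows "\<forall>j<n. \<exists>c::complex. dbl_eq (x j) (fa_smult c fa_one)"
proof (cases "(1::'a) = 0")
  case True
  have "dbl_eq (x j) (fa_smult 0 fa_one)" if "j < n" for j
    using triv[OF True] xs that by (simp add: carrier_fs fa_smult_app)
  then show ?thesis by blast
next
  case False
  note nt = False
  have fx: "fs (x i)" if "i < n" for i using xs that carrier_fs by blast
  have fF: "fs (\<lambda>w. \<Sum>i<n. fa_mul (fa_star (x i)) (x i) w)"
    by (rule fs_sum) (auto intro: fa_mul_fs fa_star_fs fx)
  have N1: "N (fa_one::'a fa) = fa_word []" unfolding fa_one_def by (rule N_id[OF nt D_word[OF nt]]) simp
  have "N (\<lambda>w. \<Sum>i<n. fa_mul (fa_star (x i)) (x i) w) = N fa_one"
    using deq_iff[OF nt fF fs_one] H by simp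
  then have z: "(\<lambda>w. \<Sum>i<n. N (fa_mul (fa_star (x i)) (x i)) w) = fa_word []"
    by (subst (asm) N_sum[OF nt]) (auto intro: fa_mul_fs fa_star_fs fx simp: N1)
  have e: "N (fa_mul (fa_star (x i)) (x i)) = OP (fa_star (N (x i))) (N (x i))" if "i < n" for i
    using that by (simp add: N_mul2[OF nt] fx fa_star_fs N_star[OF nt])
  have "\<forall>w. (\<Sum>i<n. OP (fa_star (N (x i))) (N (x i)) w) = fa_word [] w"
  proof
    fix w
    have "(\<Sum>i<n. OP (fa_star (N (x i))) (N (x i)) w) = (\<Sum>i<n. N (fa_mul (fa_star (x i)) (x i)) w)"
      by (rule sum.cong[OF refl]) (simp add: e)
    also have "\<dots> = fa_word [] w" using fun_cong[OF z, of w] by simp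
    finally show "(\<Sum>i<n. OP (fa_star (N (x i))) (N (x i)) w) = fa_word [] w" .
  qed
  then have sup: "\<forall>i<n. \<forall>w. N (x i) w \<noteq> 0 \<longrightarrow> w = []"
    by (intro pos2[OF nt]) (auto intro: N_D[OF nt] fx)
  show ?thesis
  proof (intro allI impI)
    fix j assume j: "j < n"
    have "N (x j) = fa_smult (N (x j) []) fa_one"
    proof
      fix w show "N (x j) w = fa_smult (N (x j) []) fa_one w"
        using sup j unfolding fa_smult_app fa_one_def fa_word_app by (cases "w = []") auto
    qed
    then have "dbl_eq (x j) (fa_smult (N (x j) []) fa_one)"
      using deq_N[OF nt fx[OF j]] by simp
    then show "\<exists>c. dbl_eq (x j) (fa_smult c fa_one)" by blast
  qed
qed

lemma main3:
  fixes a :: "'a::cplx_unital_alg"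
  assumes y: "y \<in> fa_carrier"
    and H: "dbl_eq (fa_mul (fa_star (dbl_emb a)) (dbl_emb a)) (fa_mul (fa_star y) y)"
  shows "\<exists>l::complex. cmod l = 1 \<and> dbl_eq (dbl_emb a) (fa_smult l y)"
proof (cases "(1::'a) = 0")
  case True
  have x0: "dbl_eq (dbl_emb a) (\<lambda>w. 0)"
    by (rule triv[OF True]) (simp add: dbl_emb_def fs_word)
  have y0: "dbl_eq y (\<lambda>w. 0)" by (rule triv[OF True]) (use y in \<open>simp add: carrier_fs\<close>)
  have "dbl_eq (dbl_emb a) (fa_smult 1 y)"
    using deq_trans[OF x0 deq_sym[OF y0]] by (simp add: fa_smult_app)
  then show ?thesis by (intro exI[of _ 1]) simp
next
  case False
  then show ?thesis using part3[OF False] y H by (simp add: carrier_fs)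
qed

theorem proposition2:
  shows
   "(\<forall>(n::nat) (x::nat \<Rightarrow> 'a::cplx_unital_alg fa).
        (\<forall>i<n. x i \<in> fa_carrier) \<and>
        dbl_eq (\<lambda>w. \<Sum>i<n. fa_mul (x i) (fa_star (x i)) w) (\<lambda>_. 0)
        \<longrightarrow> (\<forall>i<n. dbl_eq (x i) (\<lambda>_. 0)))
    \<and> (\<forall>(n::nat) (x::nat \<Rightarrow> 'a::cplx_unital_alg fa).
        (\<forall>j<n. x j \<in> fa_carrier) \<and>
        dbl_eq (\<lambda>w. \<Sum>j<n. fa_mul (fa_star (x j)) (x j) w) fa_one
        \<longrightarrow> (\<forall>j<n. \<exists>c::complex. dbl_eq (x j) (fa_smult c fa_one)))
    \<and> (\<forall>(a::'a) (y::'a fa).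
        y \<in> fa_carrier \<and>
        dbl_eq (fa_mul (fa_star (dbl_emb a)) (dbl_emb a)) (fa_mul (fa_star y) y)
        \<longrightarrow> (\<exists>l::complex. cmod l = 1 \<and> dbl_eq (dbl_emb a) (fa_smult l y)))"
  using main1 main2 main3 by blast


end
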